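(* Let $F$ be a Finsler structure on a smooth manifold $M$ of dimension $n\ge2$, and let $\alpha=d_JS-d\tau=\frac{\partial S}{\partial y^k}dx^k-d\tau$ (equivalently $\alpha=\nabla I_k\,dx^k-I_k\,\delta y^k$ with $I_k=\frac{\partial\tau}{\partial y^k}$). The $\chi$-curvature of $F$ vanishes if and only if any one of the following (mutually equivalent) conditions holds: (i) $\mathcal{L}_G\alpha=0$; (ii) $d_hd_JS=\frac{\delta}{\delta x^j}\left(\frac{\partial S}{\partial y^i}\right)dx^j\wedge dx^i=0$; (iii) $d\alpha=2E_{ij}\,\delta y^i\wedge dx^j$.
   Context: $M$ is a smooth $n$-manifold, $T_0M=TM\setminus\{0\}$, with induced coordinates $(x^i,y^i)$. A Finsler structure is a function $F:TM\to[0,\infty)$, continuous, positively $1$-homogeneous in $y$, smooth on $T_0M$, such that $g_{ij}=\frac12\frac{\partial^2F^2}{\partial y^i\partial y^j}$ is non-degenerate on $T_0M$; $g^{ij}$ is its inverse. The geodesic spray is $G=y^i\frac{\partial}{\partial x^i}-2G^i\frac{\partial}{\partial y^i}$ with $G^i=\frac14 g^{ij}\left(\frac{\partial^2F^2}{\partial y^j\partial x^k}y^k-\frac{\partial F^2}{\partial x^j}\right)$; $\mathcal{L}_G$ is the Lie derivative along $G$. Set $N^j_i=\frac{\partial G^j}{\partial y^i}$, $\frac{\delta}{\delta x^i}=\frac{\partial}{\partial x^i}-N^j_i\frac{\partial}{\partial y^j}$, $\delta y^i=dy^i+N^i_jdx^j$. The mean Berwald curvature is $E_{ij}=\frac12\frac{\partial^3G^k}{\partial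 y^i\partial y^j\partial y^k}$. For a semi-basic covector $I_k$, $\nabla I_k=G(I_k)-I_jN^j_k$ (dynamical covariant derivative). Fix a volume form $\sigma(x)\,dx\wedge dy$ on $TM$ with $\sigma$ depending only on $x$; the distortion is $\tau=\frac12\ln\frac{\det(g_{ij})}{\sigma}$, and $S=G(\tau)$. $d_JS=\frac{\partial S}{\partial y^i}dx^i$; $d_h=i_hd-di_h$ is the derivation associated with the horizontal projector $h=\frac{\delta}{\delta x^i}\otimes dx^i$. The $\chi$-curvature is $\chi=\frac12\left\{G\left(\frac{\partial S}{\partial y^i}\right)-\frac{\partial S}{\partial x^i}\right\}dx^i$. *)

theory Defs
  imports "HOL-Analysis.Analysis"
begin

text \<open>Local-coordinate model: the manifold M is (a chart domain) an open set
U of R^n, TM = U x R^n with induced coordinates (x^i, y^i). Coordinates on TM are indexed by 'n + 'n: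
Inl i is x^i, Inr i is y^i.\<close>

type_synonym 'n pt = "(real^'n) \<times> (real^'n)"

definition dirD :: "('a::real_normed_vector \<Rightarrow> real) \<Rightarrow> 'a \<Rightarrow> 'a \<Rightarrow> real" where
  "dirD f v p = deriv (\<lambda>t. f (p + t *\<^sub>R v)) 0"

definition smooth_on :: "'a::real_normed_vector set \<Rightarrow> ('a \<Rightarrow> real) \<Rightarrow> bool" where
  "smooth_on W f \<longleftrightarrow> (\<forall>vs. \<forall>p\<in>W. (foldr (\<lambda>v g. dirD g v) vs f) differentiable (at p))"

definition cvec :: "'n + 'n \<Rightarrow> ('n::finite) pt" where
  "cvec A = (case A of Inl i \<Rightarrow> (axis i 1, 0) | Inr i \<Rightarrow> (0, axis i 1))"

definition pd :: "'n + 'n \<Rightarrow> (('n::finite) pt \<Rightarrow> real) \<Rightarrow> 'n pt \<Rightarrow> real" where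
  "pd A f = dirD f (cvec A)"

abbreviation Dx :: "'n \<Rightarrow> (('n::finite) pt \<Rightarrow> real) \<Rightarrow> 'n pt \<Rightarrow> real" where
  "Dx i \<equiv> pd (Inl i)"

abbreviation Dy :: "'n \<Rightarrow> (('n::finite) pt \<Rightarrow> real) \<Rightarrow> 'n pt \<Rightarrow> real" where
  "Dy i \<equiv> pd (Inr i)"

definition T0 :: "(real^'n) set \<Rightarrow> ('n::finite) pt set" where
  "T0 U = U \<times> (UNIV - {0})"

definition fund_g :: "('n::finite pt \<Rightarrow> real) \<Rightarrow> 'n \<Rightarrow> 'n \<Rightarrow> 'n pt \<Rightarrow> real" where
  "fund_g F i j p = 1/2 * Dy i (Dy j (\<lambda>q. (F q)^2)) p"

definition gmat :: "('n::finite pt \<Rightarrow> real) \<Rightarrow> 'n pt \<Rightarrow> real^'n^'n" where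
  "gmat F p = (\<chi> i j. fund_g F i j p)"

definition ginv :: "('n::finite pt \<Rightarrow> real) \<Rightarrow> 'n \<Rightarrow> 'n \<Rightarrow> 'n pt \<Rightarrow> real" where
  "ginv F i j p = matrix_inv (gmat F p) $ i $ j"

definition finsler_on :: "(real^'n) set \<Rightarrow> (('n::finite) pt \<Rightarrow> real) \<Rightarrow> bool" where
  "finsler_on U F \<longleftrightarrow> open U
     \<and> (\<forall>p\<in>U \<times> UNIV. F p \<ge> 0)
     \<and> continuous_on (U \<times> UNIV) F
     \<and> (\<forall>x\<in>U. \<forall>y. \<forall>c::real. c > 0 \<longrightarrow> F (x, c *\<^sub>R y) = c * F (x, y))
     \<and> smooth_on (T0 U) F
     \<and> (\<forall>p\<in>T0 U. det (gmat F p) \<noteq> 0)"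

definition spray :: "('n::finite pt \<Rightarrow> real) \<Rightarrow> 'n \<Rightarrow> 'n pt \<Rightarrow> real" where
  "spray F k p = 1/4 * (\<Sum>j\<in>UNIV. ginv F k j p *
      ((\<Sum>l\<in>UNIV. Dy j (Dx l (\<lambda>q. (F q)^2)) p * (snd p $ l)) - Dx j (\<lambda>q. (F q)^2) p))"

definition nlc :: "('n::finite pt \<Rightarrow> real) \<Rightarrow> 'n \<Rightarrow> 'n \<Rightarrow> 'n pt \<Rightarrow> real" where
  "nlc F j i p = Dy i (spray F j) p"

definition Gvec :: "('n::finite pt \<Rightarrow> real) \<Rightarrow> 'n + 'n \<Rightarrow> 'n pt \<Rightarrow> real" where
  "Gvec F A p = (case A of Inl i \<Rightarrow> snd p $ i | Inr i \<Rightarrow> - 2 * spray F i p)"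

definition Gop :: "('n::finite pt \<Rightarrow> real) \<Rightarrow> ('n pt \<Rightarrow> real) \<Rightarrow> 'n pt \<Rightarrow> real" where
  "Gop F f p = (\<Sum>A\<in>UNIV. Gvec F A p * pd A f p)"

definition meanB :: "('n::finite pt \<Rightarrow> real) \<Rightarrow> 'n \<Rightarrow> 'n \<Rightarrow> 'n pt \<Rightarrow> real" where
  "meanB F i j p = 1/2 * (\<Sum>k\<in>UNIV. Dy i (Dy j (Dy k (spray F k))) p)"

text \<open>Distortion and S-curvature, w.r.t. volume form sigma(x) dx dy
(absolute values: the ratio det g / sigma has constant sign).\<close>
definition distortion :: "('n::finite pt \<Rightarrow> real) \<Rightarrow> (real^'n \<Rightarrow> real) \<Rightarrow> 'n pt \<Rightarrow> real" where
  "distortion F \<sigma> p = 1/2 * ln (\<bar>det (gmat F p)\<bar> / \<bar>\<sigma> (fst p)\<bar>)"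

definition Scurv :: "('n::finite pt \<Rightarrow> real) \<Rightarrow> (real^'n \<Rightarrow> real) \<Rightarrow> 'n pt \<Rightarrow> real" where
  "Scurv F \<sigma> = Gop F (distortion F \<sigma>)"

definition chi :: "('n::finite pt \<Rightarrow> real) \<Rightarrow> (real^'n \<Rightarrow> real) \<Rightarrow> 'n \<Rightarrow> 'n pt \<Rightarrow> real" where
  "chi F \<sigma> i p = 1/2 * (Gop F (Dy i (Scurv F \<sigma>)) p - Dx i (Scurv F \<sigma>) p)"

text \<open>Differential forms on TM by components in the basis dx^i, dy^i.
A 2-form w is given by w A B = w(d_A, d_B); wedge (a,b) A B = a_A b_B - a_B b_A.\<close>
type_synonym 'n form1 = "'n + 'n \<Rightarrow> 'n pt \<Rightarrow> real"
type_synonym 'n form2 = "'n + 'n \<Rightarrow> 'n + 'n \<Rightarrow> 'n pt \<Rightarrow> real"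

definition dform0 :: "(('n::finite) pt \<Rightarrow> real) \<Rightarrow> 'n form1" where
  "dform0 f A = pd A f"

definition dform1 :: "('n::finite) form1 \<Rightarrow> 'n form2" where
  "dform1 \<theta> A B p = pd A (\<theta> B) p - pd B (\<theta> A) p"

definition wedge :: "('n::finite) form1 \<Rightarrow> 'n form1 \<Rightarrow> 'n form2" where
  "wedge a b A B p = a A p * b B p - a B p * b A p"

definition dJ :: "(('n::finite) pt \<Rightarrow> real) \<Rightarrow> 'n form1" where
  "dJ f A = (case A of Inl i \<Rightarrow> Dy i f | Inr i \<Rightarrow> (\<lambda>p. 0))"

text \<open>Horizontal projector h = delta/delta x^i (x) dx^i, components h^C_A with
h(d_A) = sum_C h^C_A d_C.\<close>
definition hproj :: "('n::finite pt \<Rightarrow> real) \<Rightarrow> 'n + 'n \<Rightarrow> 'n + 'n \<Rightarrow> 'n pt \<Rightarrow> real" where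
  "hproj F C A p = (case A of
      Inl i \<Rightarrow> (case C of Inl k \<Rightarrow> (if k = i then 1 else 0) | Inr j \<Rightarrow> - nlc F j i p)
    | Inr i \<Rightarrow> 0)"

definition ih1 :: "('n::finite pt \<Rightarrow> real) \<Rightarrow> 'n form1 \<Rightarrow> 'n form1" where
  "ih1 F \<theta> A p = (\<Sum>C\<in>UNIV. hproj F C A p * \<theta> C p)"

definition ih2 :: "('n::finite pt \<Rightarrow> real) \<Rightarrow> 'n form2 \<Rightarrow> 'n form2" where
  "ih2 F \<omega> A B p = (\<Sum>C\<in>UNIV. hproj F C A p * \<omega> C B p + hproj F C B p * \<omega> A C p)"

definition dh :: "('n::finite pt \<Rightarrow> real) \<Rightarrow> 'n form1 \<Rightarrow> 'n form2" where
  "dh F \<theta> A B p = ih2 F (dform1 \<theta>) A B p - dform1 (ih1 F \<theta>) A B p"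

definition lie1 :: "('n::finite + 'n \<Rightarrow> 'n pt \<Rightarrow> real) \<Rightarrow> 'n form1 \<Rightarrow> 'n form1" where
  "lie1 X \<theta> A p = (\<Sum>B\<in>UNIV. X B p * pd B (\<theta> A) p + \<theta> B p * pd A (X B) p)"

definition alpha :: "('n::finite pt \<Rightarrow> real) \<Rightarrow> (real^'n \<Rightarrow> real) \<Rightarrow> 'n form1" where
  "alpha F \<sigma> A p = dJ (Scurv F \<sigma>) A p - dform0 (distortion F \<sigma>) A p"

definition dx_form :: "'n \<Rightarrow> ('n::finite) form1" where
  "dx_form j A p = (case A of Inl k \<Rightarrow> (if k = j then 1 else 0) | Inr k \<Rightarrow> 0)"

definition deltay_form :: "('n::finite pt \<Rightarrow> real) \<Rightarrow> 'n \<Rightarrow> 'n form1" where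
  "deltay_form F i A p = (case A of Inl j \<Rightarrow> nlc F i j p | Inr k \<Rightarrow> (if k = i then 1 else 0))"

end

theory Submission
  imports Defs
begin


lemma dirD_path:
  fixes f :: "'a::real_normed_vector \<Rightarrow> real"
  assumes "f differentiable (at p)"
  shows "((\<lambda>t. f (p + t *\<^sub>R v)) has_real_derivative frechet_derivative f (at p) v) (at 0)"
proof -
  have d: "(f has_derivative frechet_derivative f (at p)) (at p)"
    using assms frechet_derivative_works by blast
  have bl: "bounded_linear (frechet_derivative f (at p))"
    using d has_derivative_bounded_linear by blast
  have l: "((\<lambda>t. p + t *\<^sub>R v) has_derivative (\<lambda>t. t *\<^sub>R v)) (at 0)"
    by (auto intro!: derivative_eq_intros)
  have d': "(f has_derivative frechet_derivative f (at p)) (at ((\<lambda>t. p + t *\<^sub>R v) 0))"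
    using d by simp
  have "((\<lambda>t. f (p + t *\<^sub>R v)) has_derivative (\<lambda>t. frechet_derivative f (at p) (t *\<^sub>R v))) (at 0)"
    using diff_chain_at[OF l d'] by (simp add: o_def)
  then show ?thesis
    apply (rule has_derivative_imp_has_field_derivative)
    using bl[THEN bounded_linear.linear, THEN linear_cmul] by simp
qed

lemma dirD_frechet:
  fixes f :: "'a::real_normed_vector \<Rightarrow> real"
  assumes "f differentiable (at p)"
  shows "dirD f v p = frechet_derivative f (at p) v"
  unfolding dirD_def using dirD_path[OF assms] by (rule DERIV_imp_deriv)

lemma dirD_DERIV:
  fixes f :: "'a::real_normed_vector \<Rightarrow> real"
  assumes "f differentiable (at p)"
  shows "((\<lambda>t. f (p + t *\<^sub>R v)) has_real_derivative dirD f v p) (at 0)"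
  using dirD_path[OF assms] dirD_frechet[OF assms] by simp

lemma eventually_line_in_open:
  fixes p :: "'a::real_normed_vector"
  assumes "open W" "p \<in> W"
  shows "eventually (\<lambda>t. p + t *\<^sub>R v \<in> W) (nhds (0::real))"
proof -
  obtain e where e: "e > 0" "ball p e \<subseteq> W" using assms openE by blast
  define d where "d = e / (norm v + 1)"
  have nv: "norm v + 1 > 0" by (smt (verit) norm_ge_zero)
  have d: "d > 0" using e nv by (simp add: d_def)
  have "\<forall>t::real. dist t 0 < d \<longrightarrow> p + t *\<^sub>R v \<in> W"
  proof (intro allI impI)
    fix t :: real assume "dist t 0 < d"
    then have t: "\<bar>t\<bar> < d" by simp
    have "norm (t *\<^sub>R v) = \<bar>t\<bar> * norm v" by simp
    also have "\<dots> \<le> \<bar>t\<bar> * (norm v + 1)" by (simp add: mult_left_mono)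
    also have "\<dots> < d * (norm v + 1)" using t nv by (intro mult_strict_right_mono) auto
    also have "\<dots> = e" unfolding d_def using nv by simp
    finally have "dist p (p + t *\<^sub>R v) < e" by (simp add: dist_norm)
    then show "p + t *\<^sub>R v \<in> W" using e by auto
  qed
  then show ?thesis unfolding eventually_nhds_metric using d by blast
qed

lemma dirD_local:
  fixes f g :: "'a::real_normed_vector \<Rightarrow> real"
  assumes "open W" "p \<in> W" "\<And>q. q \<in> W \<Longrightarrow> f q = g q"
  shows "dirD f v p = dirD g v p"
  unfolding dirD_def
  by (rule deriv_cong_ev[OF _ refl]) (use eventually_line_in_open[OF assms(1,2), of v] assms(3) in \<open>auto elim: eventually_mono\<close>)

lemma dirD_local_fun:
  fixes f g :: "'a::real_normed_vector \<Rightarrow> real"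
  assumes "open W" "\<And>q. q \<in> W \<Longrightarrow> f q = g q"
  shows "q \<in> W \<Longrightarrow> dirD f v q = dirD g v q"
  using dirD_local assms by blast

lemma dirD_const[simp]: "dirD (\<lambda>_. c) v = (\<lambda>_. 0)"
  unfolding dirD_def by (simp add: fun_eq_iff)

lemma dirD_add:
  fixes f g :: "'a::real_normed_vector \<Rightarrow> real"
  assumes "f differentiable (at p)" "g differentiable (at p)"
  shows "dirD (\<lambda>q. f q + g q) v p = dirD f v p + dirD g v p"
  unfolding dirD_def[of "\<lambda>q. f q + g q"]
  by (rule DERIV_imp_deriv) (intro DERIV_add dirD_DERIV assms)

lemma dirD_diff:
  fixes f g :: "'a::real_normed_vector \<Rightarrow> real"
  assumes "f differentiable (at p)" "g differentiable (at p)"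
  shows "dirD (\<lambda>q. f q - g q) v p = dirD f v p - dirD g v p"
  unfolding dirD_def[of "\<lambda>q. f q - g q"]
  by (rule DERIV_imp_deriv) (intro DERIV_diff dirD_DERIV assms)

lemma dirD_mult:
  fixes f g :: "'a::real_normed_vector \<Rightarrow> real"
  assumes "f differentiable (at p)" "g differentiable (at p)"
  shows "dirD (\<lambda>q. f q * g q) v p = f p * dirD g v p + dirD f v p * g p"
proof -
  have "((\<lambda>t. f (p + t *\<^sub>R v) * g (p + t *\<^sub>R v)) has_real_derivative
      (f (p + 0 *\<^sub>R v) * dirD g v p + dirD f v p * g (p + 0 *\<^sub>R v))) (at 0)"
    by (intro DERIV_mult' dirD_DERIV assms)
  then show ?thesis unfolding dirD_def[of "\<lambda>q. f q * g q"]
    by (intro DERIV_imp_deriv) (simp add: algebra_simps)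
qed

lemma dirD_cmult:
  fixes f :: "'a::real_normed_vector \<Rightarrow> real"
  assumes "f differentiable (at p)"
  shows "dirD (\<lambda>q. c * f q) v p = c * dirD f v p"
  using dirD_mult[OF differentiable_const assms, of c v] by simp

lemma dirD_minus:
  fixes f :: "'a::real_normed_vector \<Rightarrow> real"
  assumes "f differentiable (at p)"
  shows "dirD (\<lambda>q. - f q) v p = - dirD f v p"
  using dirD_cmult[OF assms, of "-1" v] by simp

lemma dirD_sum:
  fixes f :: "'i \<Rightarrow> 'a::real_normed_vector \<Rightarrow> real"
  assumes "finite I" "\<And>i. i \<in> I \<Longrightarrow> f i differentiable (at p)"
  shows "dirD (\<lambda>q. \<Sum>i\<in>I. f i q) v p = (\<Sum>i\<in>I. dirD (f i) v p)"
  using assms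
proof (induction I rule: finite_induct)
  case empty then show ?case by simp
next
  case (insert x F)
  have "dirD (\<lambda>q. \<Sum>i\<in>insert x F. f i q) v p = dirD (\<lambda>q. f x q + (\<Sum>i\<in>F. f i q)) v p"
    using insert by simp
  also have "\<dots> = dirD (f x) v p + dirD (\<lambda>q. \<Sum>i\<in>F. f i q) v p"
    using insert by (intro dirD_add) (auto intro!: differentiable_sum)
  finally show ?case using insert by simp
qed

lemma dirD_inverse:
  fixes f :: "'a::real_normed_vector \<Rightarrow> real"
  assumes "f differentiable (at p)" "f p \<noteq> 0"
  shows "dirD (\<lambda>q. 1 / f q) v p = - dirD f v p / (f p)^2"
proof -
  have "((\<lambda>t. inverse (f (p + t *\<^sub>R v))) has_real_derivative
      - (dirD f v p * inverse (f (p + 0 *\<^sub>R v) ^ Suc (Suc 0)))) (at 0)"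
    by (intro DERIV_inverse_fun dirD_DERIV assms) (use assms in simp)
  then show ?thesis unfolding dirD_def[of "\<lambda>q. 1 / f q"]
    by (intro DERIV_imp_deriv) (simp add: divide_inverse power2_eq_square algebra_simps)
qed

lemma DERIV_lnabs:
  fixes x :: real
  assumes "x \<noteq> 0"
  shows "DERIV (\<lambda>x. ln \<bar>x\<bar>) x :> 1 / x"
proof (cases "x > 0")
  case True
  have d: "DERIV (\<lambda>z. ln z) x :> 1 / x" using True by (auto intro!: derivative_eq_intros)
  have e: "eventually (\<lambda>z. ln z = ln \<bar>z\<bar>) (nhds x)"
    using True by (auto simp: eventually_nhds_metric dist_real_def intro!: exI[of _ x])
  show ?thesis using DERIV_cong_ev[OF refl e refl] d by simp
next
  case False
  then have n: "x < 0" using assms by auto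
  have d: "DERIV (\<lambda>z. ln (- z)) x :> 1 / x" using n by (auto intro!: derivative_eq_intros)
  have e: "eventually (\<lambda>z. ln (- z) = ln \<bar>z\<bar>) (nhds x)"
    using n by (auto simp: eventually_nhds_metric dist_real_def intro!: exI[of _ "- x"])
  show ?thesis using DERIV_cong_ev[OF refl e refl] d by simp
qed

lemma dirD_lnabs:
  fixes f :: "'a::real_normed_vector \<Rightarrow> real"
  assumes "f differentiable (at p)" "f p \<noteq> 0"
  shows "dirD (\<lambda>q. ln \<bar>f q\<bar>) v p = dirD f v p / f p"
proof -
  have dl: "DERIV (\<lambda>x. ln \<bar>x\<bar>) (f p) :> 1 / f p"
    by (rule DERIV_lnabs) (use assms in simp)
  have "((\<lambda>t. ln \<bar>f (p + t *\<^sub>R v)\<bar>) has_real_derivative (1 / f p) * dirD f v p) (at 0)"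
    using DERIV_chain2[OF _ dirD_DERIV[OF assms(1)], of "\<lambda>x. ln \<bar>x\<bar>" "1 / f p" v] dl by simp
  then show ?thesis unfolding dirD_def[of "\<lambda>q. ln \<bar>f q\<bar>"]
    by (intro DERIV_imp_deriv) simp
qed

lemma differentiable_lnabs:
  fixes f :: "'a::real_normed_vector \<Rightarrow> real"
  assumes "f differentiable (at p)" "f p \<noteq> 0"
  shows "(\<lambda>q. ln \<bar>f q\<bar>) differentiable (at p)"
proof -
  have "(\<lambda>x::real. ln \<bar>x\<bar>) differentiable (at (f p))"
    using DERIV_lnabs[of "f p"] assms(2) unfolding has_field_derivative_def differentiable_def by blast
  then show ?thesis using differentiable_chain_at[OF assms(1)] by (simp add: o_def)
qed


definition smk :: "'a::real_normed_vector set \<Rightarrow> nat \<Rightarrow> ('a \<Rightarrow> real) \<Rightarrow> bool" where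
  "smk W n f \<longleftrightarrow> (\<forall>vs. length vs \<le> n \<longrightarrow> (\<forall>p\<in>W. foldr (\<lambda>v g. dirD g v) vs f differentiable (at p)))"

lemma smooth_on_smk: "smooth_on W f \<longleftrightarrow> (\<forall>n. smk W n f)"
  unfolding smooth_on_def smk_def by (meson le_refl)

lemma smk_0: "smk W 0 f \<longleftrightarrow> (\<forall>p\<in>W. f differentiable (at p))"
  by (simp add: smk_def)

lemma smk_Suc: "smk W (Suc n) f \<longleftrightarrow> (\<forall>p\<in>W. f differentiable (at p)) \<and> (\<forall>v. smk W n (dirD f v))"
proof
  assume A: "smk W (Suc n) f"
  show "(\<forall>p\<in>W. f differentiable (at p)) \<and> (\<forall>v. smk W n (dirD f v))"
  proof
    show "\<forall>p\<in>W. f differentiable (at p)" using A[unfolded smk_def, rule_format, of "[]"] by simp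
    show "\<forall>v. smk W n (dirD f v)" unfolding smk_def
    proof (intro allI impI ballI)
      fix v :: 'a and vs :: "'a list" and p assume "length vs \<le> n" "p \<in> W"
      then show "foldr (\<lambda>v g. dirD g v) vs (dirD f v) differentiable (at p)"
        using A[unfolded smk_def, rule_format, of "vs @ [v]" p] by simp
    qed
  qed
next
  assume B: "(\<forall>p\<in>W. f differentiable (at p)) \<and> (\<forall>v. smk W n (dirD f v))"
  show "smk W (Suc n) f" unfolding smk_def
  proof (intro allI impI ballI)
    fix vs :: "'a list" and p assume l: "length vs \<le> Suc n" and p: "p \<in> W"
    show "foldr (\<lambda>v g. dirD g v) vs f differentiable (at p)"
    proof (cases vs rule: rev_cases)
      case Nil then show ?thesis using B p by simp
    next
      case (snoc ws v)
      then have "length ws \<le> n" using l by simp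
      then show ?thesis using B p snoc unfolding smk_def by simp
    qed
  qed
qed

lemma smk_mono: "smk W (Suc n) f \<Longrightarrow> smk W n f" by (auto simp: smk_def)
lemma smk_le: "smk W n f \<Longrightarrow> m \<le> n \<Longrightarrow> smk W m f" by (auto simp: smk_def)

lemma differentiable_local:
  fixes f g :: "'a::real_normed_vector \<Rightarrow> real"
  assumes "open W" "p \<in> W" "\<And>q. q \<in> W \<Longrightarrow> f q = g q" "f differentiable (at p)"
  shows "g differentiable (at p)"
  using assms has_derivative_transform_within_open unfolding differentiable_def by blast

lemma smk_cong:
  assumes "open W" "\<And>q. q \<in> W \<Longrightarrow> f q = g q" "smk W n f"
  shows "smk W n g"
  using assms(2,3)
proof (induction n arbitrary: f g)
  case 0
  then show ?case unfolding smk_0 using differentiable_local[OF assms(1)] by blast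
next
  case (Suc n)
  have "\<forall>p\<in>W. g differentiable (at p)"
    using Suc.prems differentiable_local[OF assms(1)] unfolding smk_Suc by blast
  moreover have "smk W n (dirD g v)" for v
    using Suc.IH[of "dirD f v" "dirD g v"] Suc.prems dirD_local[OF assms(1)] unfolding smk_Suc by blast
  ultimately show ?case unfolding smk_Suc by blast
qed

lemma smk_const[simp]: "smk W n (\<lambda>_. c)"
  by (induction n arbitrary: c) (auto simp: smk_0 smk_Suc)

lemma smk_add:
  assumes "open W" "smk W n f" "smk W n g"
  shows "smk W n (\<lambda>q. f q + g q)"
  using assms(2,3)
proof (induction n arbitrary: f g)
  case 0 then show ?case by (auto simp: smk_0)
next
  case (Suc n)
  have d: "\<forall>p\<in>W. f differentiable (at p)" "\<forall>p\<in>W. g differentiable (at p)"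
    using Suc.prems unfolding smk_Suc by auto
  have "smk W n (dirD (\<lambda>q. f q + g q) v)" for v
  proof (rule smk_cong[OF assms(1)])
    show "smk W n (\<lambda>q. dirD f v q + dirD g v q)"
      using Suc.prems by (intro Suc.IH) (auto simp: smk_Suc)
    show "q \<in> W \<Longrightarrow> dirD f v q + dirD g v q = dirD (\<lambda>q. f q + g q) v q" for q
      using d by (simp add: dirD_add)
  qed
  then show ?case using d by (auto simp: smk_Suc)
qed

lemma smk_mult:
  assumes "open W" "smk W n f" "smk W n g"
  shows "smk W n (\<lambda>q. f q * g q)"
  using assms(2,3)
proof (induction n arbitrary: f g)
  case 0 then show ?case by (auto simp: smk_0)
next
  case (Suc n)
  have d: "\<forall>p\<in>W. f differentiable (at p)" "\<forall>p\<in>W. g differentiable (at p)"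
    using Suc.prems unfolding smk_Suc by auto
  have "smk W n (dirD (\<lambda>q. f q * g q) v)" for v
  proof (rule smk_cong[OF assms(1)])
    show "smk W n (\<lambda>q. f q * dirD g v q + dirD f v q * g q)"
      using Suc.prems smk_mono[of W n f] smk_mono[of W n g]
      by (intro smk_add[OF assms(1)] Suc.IH) (auto simp: smk_Suc)
    show "q \<in> W \<Longrightarrow> f q * dirD g v q + dirD f v q * g q = dirD (\<lambda>q. f q * g q) v q" for q
      using d by (simp add: dirD_mult)
  qed
  then show ?case using d by (auto simp: smk_Suc)
qed

lemma smk_cmult: "open W \<Longrightarrow> smk W n f \<Longrightarrow> smk W n (\<lambda>q. c * f q)"
  using smk_mult[of W n "\<lambda>_. c" f] by simp

lemma smk_diff:
  assumes "open W" "smk W n f" "smk W n g"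
  shows "smk W n (\<lambda>q. f q - g q)"
  using smk_add[OF assms(1,2) smk_cmult[OF assms(1,3), of "-1"]] by simp

lemma smk_sum:
  assumes "open W" "finite I" "\<And>i. i \<in> I \<Longrightarrow> smk W n (f i)"
  shows "smk W n (\<lambda>q. \<Sum>i\<in>I. f i q)"
  using assms(2,3)
  by (induction I rule: finite_induct) (auto intro: smk_add[OF assms(1)])

lemma smk_prod:
  assumes "open W" "finite I" "\<And>i. i \<in> I \<Longrightarrow> smk W n (f i)"
  shows "smk W n (\<lambda>q. \<Prod>i\<in>I. f i q)"
  using assms(2,3)
  by (induction I rule: finite_induct) (auto intro: smk_mult[OF assms(1)])

lemma smk_inverse:
  assumes "open W" "\<And>q. q \<in> W \<Longrightarrow> f q \<noteq> 0" "smk W n f"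
  shows "smk W n (\<lambda>q. 1 / f q)"
  using assms(3)
proof (induction n)
  case 0 then show ?case using assms(2) by (auto simp: smk_0 intro!: differentiable_divide)
next
  case (Suc n)
  have d: "\<forall>p\<in>W. f differentiable (at p)"
    using Suc.prems unfolding smk_Suc by auto
  have IH: "smk W n (\<lambda>q. 1 / f q)" using Suc smk_mono by blast
  have "smk W n (dirD (\<lambda>q. 1 / f q) v)" for v
  proof (rule smk_cong[OF assms(1)])
    show "smk W n (\<lambda>q. (- dirD f v q) * ((1 / f q) * (1 / f q)))"
      using Suc.prems IH
      by (intro smk_mult[OF assms(1)] smk_cmult[OF assms(1), of _ _ "-1", simplified]) (auto simp: smk_Suc)
    show "q \<in> W \<Longrightarrow> (- dirD f v q) * ((1 / f q) * (1 / f q)) = dirD (\<lambda>q. 1 / f q) v q" for q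
      using d assms(2) by (simp add: dirD_inverse power2_eq_square)
  qed
  then show ?case using d assms(2) by (auto simp: smk_Suc intro!: differentiable_divide)
qed

lemma smk_lnabs:
  assumes "open W" "\<And>q. q \<in> W \<Longrightarrow> f q \<noteq> 0" "smk W n f"
  shows "smk W n (\<lambda>q. ln \<bar>f q\<bar>)"
proof (cases n)
  case 0 then show ?thesis using assms by (auto simp: smk_0 intro!: differentiable_lnabs)
next
  case (Suc m)
  have d: "\<forall>p\<in>W. f differentiable (at p)"
    using assms(3) unfolding Suc smk_Suc by auto
  have I: "smk W m (\<lambda>q. 1 / f q)"
    by (rule smk_inverse[OF assms(1)]) (use assms(2,3) Suc smk_mono in auto)
  have "smk W m (dirD (\<lambda>q. ln \<bar>f q\<bar>) v)" for v
  proof (rule smk_cong[OF assms(1)])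
    show "smk W m (\<lambda>q. dirD f v q * (1 / f q))"
      using assms(3) Suc I by (intro smk_mult[OF assms(1)]) (auto simp: smk_Suc)
    show "q \<in> W \<Longrightarrow> dirD f v q * (1 / f q) = dirD (\<lambda>q. ln \<bar>f q\<bar>) v q" for q
      using d assms(2) by (simp add: dirD_lnabs)
  qed
  then show ?thesis using d assms(2) Suc by (auto simp: smk_Suc intro!: differentiable_lnabs)
qed

lemma dirD_linear:
  assumes "bounded_linear f"
  shows "dirD f v = (\<lambda>_. f v)"
proof
  fix p
  have "f differentiable (at p)" using assms bounded_linear_imp_differentiable by blast
  moreover have "frechet_derivative f (at p) = f"
    using frechet_derivative_at[OF bounded_linear_imp_has_derivative[OF assms]] by simp
  ultimately show "dirD f v p = f v" by (simp add: dirD_frechet)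
qed

lemma smk_linear: "bounded_linear f \<Longrightarrow> smk W n f"
  by (cases n) (auto simp: smk_0 smk_Suc dirD_linear bounded_linear_imp_differentiable)

lemma smooth_dirD: "smooth_on W f \<Longrightarrow> smooth_on W (dirD f v)"
  unfolding smooth_on_smk using smk_Suc by blast

lemma smooth_diff: "smooth_on W f \<Longrightarrow> p \<in> W \<Longrightarrow> f differentiable (at p)"
  unfolding smooth_on_smk using smk_0 by blast

lemma smooth_cong: "open W \<Longrightarrow> (\<And>q. q \<in> W \<Longrightarrow> f q = g q) \<Longrightarrow> smooth_on W f \<Longrightarrow> smooth_on W g"
  unfolding smooth_on_smk using smk_cong by blast

lemma smooth_const[simp]: "smooth_on W (\<lambda>_. c)"
  unfolding smooth_on_smk by simp

lemma smooth_add: "open W \<Longrightarrow> smooth_on W f \<Longrightarrow> smooth_on W g \<Longrightarrow> smooth_on W (\<lambda>q. f q + g q)"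
  unfolding smooth_on_smk using smk_add by blast
lemma smooth_diff_fun: "open W \<Longrightarrow> smooth_on W f \<Longrightarrow> smooth_on W g \<Longrightarrow> smooth_on W (\<lambda>q. f q - g q)"
  unfolding smooth_on_smk using smk_diff by blast
lemma smooth_mult: "open W \<Longrightarrow> smooth_on W f \<Longrightarrow> smooth_on W g \<Longrightarrow> smooth_on W (\<lambda>q. f q * g q)"
  unfolding smooth_on_smk using smk_mult by blast
lemma smooth_cmult: "open W \<Longrightarrow> smooth_on W f \<Longrightarrow> smooth_on W (\<lambda>q. c * f q)"
  unfolding smooth_on_smk using smk_cmult by blast
lemma smooth_sum: "open W \<Longrightarrow> finite I \<Longrightarrow> (\<And>i. i \<in> I \<Longrightarrow> smooth_on W (f i)) \<Longrightarrow> smooth_on W (\<lambda>q. \<Sum>i\<in>I. f i q)"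
  unfolding smooth_on_smk using smk_sum by blast
lemma smooth_prod: "open W \<Longrightarrow> finite I \<Longrightarrow> (\<And>i. i \<in> I \<Longrightarrow> smooth_on W (f i)) \<Longrightarrow> smooth_on W (\<lambda>q. \<Prod>i\<in>I. f i q)"
  unfolding smooth_on_smk using smk_prod by blast
lemma smooth_inverse: "open W \<Longrightarrow> (\<And>q. q \<in> W \<Longrightarrow> f q \<noteq> 0) \<Longrightarrow> smooth_on W f \<Longrightarrow> smooth_on W (\<lambda>q. 1 / f q)"
  unfolding smooth_on_smk using smk_inverse by blast
lemma smooth_lnabs: "open W \<Longrightarrow> (\<And>q. q \<in> W \<Longrightarrow> f q \<noteq> 0) \<Longrightarrow> smooth_on W f \<Longrightarrow> smooth_on W (\<lambda>q. ln \<bar>f q\<bar>)"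
  unfolding smooth_on_smk using smk_lnabs by blast
lemma smooth_linear: "bounded_linear f \<Longrightarrow> smooth_on W f"
  unfolding smooth_on_smk using smk_linear by blast

lemma dirD_fst:
  fixes k :: "'a::real_normed_vector \<Rightarrow> real"
  shows "dirD (\<lambda>p::'a \<times> 'b::real_normed_vector. k (fst p)) v = (\<lambda>p. dirD k (fst v) (fst p))"
  unfolding dirD_def by simp

lemma foldr_fst:
  fixes k :: "'a::real_normed_vector \<Rightarrow> real"
  shows "foldr (\<lambda>v g. dirD g v) vs (\<lambda>p::'a \<times> 'b::real_normed_vector. k (fst p))
     = (\<lambda>p. foldr (\<lambda>v g. dirD g v) (map fst vs) k (fst p))"
  by (induction vs) (simp_all add: dirD_fst)

lemma smooth_fst:
  fixes k :: "'a::real_normed_vector \<Rightarrow> real"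
  assumes "smooth_on U k"
  shows "smooth_on (U \<times> V) (\<lambda>p::'a \<times> 'b::real_normed_vector. k (fst p))"
  unfolding smooth_on_def foldr_fst
proof (intro allI ballI)
  fix vs and p :: "'a \<times> 'b" assume "p \<in> U \<times> V"
  then have "foldr (\<lambda>v g. dirD g v) (map fst vs) k differentiable (at (fst p))"
    using assms unfolding smooth_on_def by auto
  then show "(\<lambda>p. foldr (\<lambda>v g. dirD g v) (map fst vs) k (fst p)) differentiable (at p)"
    using differentiable_chain_at[of fst p] bounded_linear_imp_differentiable[OF bounded_linear_fst]
    by (auto simp: o_def)
qed


lemma dirD_DERIV_at:
  fixes f :: "'a::real_normed_vector \<Rightarrow> real"
  assumes "f differentiable (at (p + t *\<^sub>R v))"
  shows "((\<lambda>s. f (p + s *\<^sub>R v)) has_real_derivative dirD f v (p + t *\<^sub>R v)) (at t)"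
proof -
  let ?q = "p + t *\<^sub>R v"
  have d: "(f has_derivative frechet_derivative f (at ?q)) (at ?q)"
    using assms frechet_derivative_works by blast
  have bl: "bounded_linear (frechet_derivative f (at ?q))"
    using d has_derivative_bounded_linear by blast
  have l: "((\<lambda>s. p + s *\<^sub>R v) has_derivative (\<lambda>s. s *\<^sub>R v)) (at t)"
    by (auto intro!: derivative_eq_intros)
  have "((\<lambda>s. f (p + s *\<^sub>R v)) has_derivative (\<lambda>s. frechet_derivative f (at ?q) (s *\<^sub>R v))) (at t)"
    using diff_chain_at[OF l] d by (simp add: o_def)
  then have "((\<lambda>s. f (p + s *\<^sub>R v)) has_real_derivative frechet_derivative f (at ?q) v) (at t)"
    apply (rule has_derivative_imp_has_field_derivative)
    using bl[THEN bounded_linear.linear, THEN linear_cmul] by simp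
  then show ?thesis using dirD_frechet[OF assms] by simp
qed

lemma schwarz_one:
  fixes f :: "'a::real_normed_vector \<Rightarrow> real"
  assumes W: "open W" "p \<in> W" and fd: "\<And>q. q \<in> W \<Longrightarrow> f differentiable (at q)"
    and ga: "dirD f a differentiable (at p)" and e: "e > 0"
  shows "\<exists>d>0. \<forall>h. 0 < h \<and> h < d \<longrightarrow>
    \<bar>(f (p + h *\<^sub>R a + h *\<^sub>R b) - f (p + h *\<^sub>R a) - f (p + h *\<^sub>R b) + f p) / h^2 - dirD (dirD f a) b p\<bar> \<le> e"
proof -
  define g where "g = dirD f a"
  define g' where "g' = frechet_derivative g (at p)"
  have gd: "(g has_derivative g') (at p)" using ga frechet_derivative_works g_def g'_def by blast
  have bl: "bounded_linear g'" using gd has_derivative_bounded_linear by blast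
  have D: "dirD g b p = g' b" using dirD_frechet[OF ga[folded g_def]] g'_def by simp
  define K where "K = 2 * norm a + norm b + 1"
  have K: "K > 0" "norm a + norm b \<le> K" "2 * norm a + norm b \<le> K"
    unfolding K_def by (smt (verit) norm_ge_zero)+
  define \<epsilon> where "\<epsilon> = e / K"
  have \<epsilon>: "\<epsilon> > 0" using e K by (simp add: \<epsilon>_def)
  obtain \<delta> where \<delta>: "\<delta> > 0" "\<And>y. norm (y - p) < \<delta> \<Longrightarrow> \<bar>g y - g p - g' (y - p)\<bar> \<le> \<epsilon> * norm (y - p)"
    using gd[unfolded has_derivative_at_alt] \<epsilon> by (metis real_norm_def)
  obtain r where r: "r > 0" "ball p r \<subseteq> W" using W openE by blast
  define d where "d = min \<delta> r / K"
  show ?thesis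
  proof (intro exI[of _ d] conjI allI impI)
    show "d > 0" using \<delta> r K by (simp add: d_def)
    fix h :: real assume h: "0 < h \<and> h < d"
    have hK: "h * K < min \<delta> r" using h K by (simp add: d_def pos_less_divide_eq)
    have small: "norm (t *\<^sub>R a + s *\<^sub>R b) \<le> h * K" if "0 \<le> t" "t \<le> h" "0 \<le> s" "s \<le> h" for t s
    proof -
      have "norm (t *\<^sub>R a + s *\<^sub>R b) \<le> t * norm a + s * norm b"
        using norm_triangle_ineq[of "t *\<^sub>R a" "s *\<^sub>R b"] that by simp
      also have "\<dots> \<le> h * norm a + h * norm b"
        using that by (intro add_mono mult_right_mono) auto
      also have "\<dots> \<le> h * K" using K h by (simp add: distrib_left[symmetric] mult_left_mono)
      finally show ?thesis .
    qed
    have inW: "p + t *\<^sub>R a + s *\<^sub>R b \<in> W" if "0 \<le> t" "t \<le> h" "0 \<le> s" "s \<le> h" for t s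
    proof -
      have dd: "dist p (p + x) = norm x" for x :: 'a by (simp add: dist_norm)
      have "dist p (p + (t *\<^sub>R a + s *\<^sub>R b)) < r"
        unfolding dd using small[OF that] hK by simp
      then have "dist p (p + t *\<^sub>R a + s *\<^sub>R b) < r" by (simp add: add.assoc)
      then show ?thesis using r by auto
    qed
    define \<phi> where "\<phi> t = f (p + h *\<^sub>R b + t *\<^sub>R a) - f (p + t *\<^sub>R a)" for t
    have der: "DERIV \<phi> t :> g (p + h *\<^sub>R b + t *\<^sub>R a) - g (p + t *\<^sub>R a)" if "0 \<le> t" "t \<le> h" for t
    proof -
      have w1: "p + h *\<^sub>R b + t *\<^sub>R a \<in> W" using inW[OF that, of h] h by (simp add: algebra_simps)
      have w2: "p + t *\<^sub>R a \<in> W" using inW[OF that, of 0] h by simp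
      show ?thesis unfolding \<phi>_def g_def
        by (intro DERIV_diff dirD_DERIV_at fd w1 w2)
    qed
    obtain \<xi> where \<xi>: "0 < \<xi>" "\<xi> < h"
      "\<phi> h - \<phi> 0 = (h - 0) * (g (p + h *\<^sub>R b + \<xi> *\<^sub>R a) - g (p + \<xi> *\<^sub>R a))"
      using MVT2[of 0 h \<phi> "\<lambda>t. g (p + h *\<^sub>R b + t *\<^sub>R a) - g (p + t *\<^sub>R a)"] der h by auto
    have \<Delta>: "f (p + h *\<^sub>R a + h *\<^sub>R b) - f (p + h *\<^sub>R a) - f (p + h *\<^sub>R b) + f p = \<phi> h - \<phi> 0"
      unfolding \<phi>_def by (simp add: algebra_simps)
    define u1 where "u1 = \<xi> *\<^sub>R a + h *\<^sub>R b"
    define u2 where "u2 = \<xi> *\<^sub>R a + 0 *\<^sub>R b"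
    have n1: "norm u1 < \<delta>" using small[of \<xi> h] \<xi> hK unfolding u1_def by auto
    have n2: "norm u2 < \<delta>" using small[of \<xi> 0] \<xi> hK unfolding u2_def by auto
    have R1: "\<bar>g (p + u1) - g p - g' u1\<bar> \<le> \<epsilon> * norm u1" using \<delta>(2)[of "p + u1"] n1 by simp
    have R2: "\<bar>g (p + u2) - g p - g' u2\<bar> \<le> \<epsilon> * norm u2" using \<delta>(2)[of "p + u2"] n2 by simp
    have lin: "g' u1 - g' u2 = h * g' b"
      unfolding u1_def u2_def
      using bl[THEN bounded_linear.linear, THEN linear_cmul] bl[THEN bounded_linear.linear, THEN linear_add]
      by simp
    have nsum: "norm u1 + norm u2 \<le> h * K"
    proof -
      have "norm u1 \<le> \<xi> * norm a + h * norm b"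
        unfolding u1_def using norm_triangle_ineq[of "\<xi> *\<^sub>R a" "h *\<^sub>R b"] \<xi> h by simp
      moreover have "norm u2 \<le> h * norm a" unfolding u2_def using \<xi> by (simp add: mult_right_mono)
      moreover have "\<xi> * norm a \<le> h * norm a" using \<xi> by (simp add: mult_right_mono)
      ultimately have "norm u1 + norm u2 \<le> h * (2 * norm a + norm b)" by (simp add: algebra_simps)
      also have "\<dots> \<le> h * K" using K h by (intro mult_left_mono) auto
      finally show ?thesis .
    qed
    have main: "\<bar>(g (p + u1) - g (p + u2)) - h * g' b\<bar> \<le> e * h"
    proof -
      have "\<bar>(g (p + u1) - g (p + u2)) - h * g' b\<bar> =
          \<bar>(g (p + u1) - g p - g' u1) - (g (p + u2) - g p - g' u2)\<bar>"
        using lin by (simp add: algebra_simps)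
      also have "\<dots> \<le> \<epsilon> * norm u1 + \<epsilon> * norm u2" using R1 R2 by linarith
      also have "\<dots> \<le> \<epsilon> * (h * K)" using nsum \<epsilon> by (simp add: distrib_left[symmetric] mult_left_mono)
      also have "\<dots> = e * h" using K by (simp add: \<epsilon>_def)
      finally show ?thesis .
    qed
    have eq: "(f (p + h *\<^sub>R a + h *\<^sub>R b) - f (p + h *\<^sub>R a) - f (p + h *\<^sub>R b) + f p) / h^2 - dirD (dirD f a) b p
        = ((g (p + u1) - g (p + u2)) - h * g' b) / h"
    proof -
      have E: "f (p + h *\<^sub>R a + h *\<^sub>R b) - f (p + h *\<^sub>R a) - f (p + h *\<^sub>R b) + f p
          = h * (g (p + u1) - g (p + u2))"
        using \<Delta> \<xi>(3) unfolding u1_def u2_def by (simp add: algebra_simps)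
      show ?thesis unfolding E using h D[unfolded g_def]
        by (simp add: power2_eq_square field_simps g_def)
    qed
    show "\<bar>(f (p + h *\<^sub>R a + h *\<^sub>R b) - f (p + h *\<^sub>R a) - f (p + h *\<^sub>R b) + f p) / h^2 - dirD (dirD f a) b p\<bar> \<le> e"
      unfolding eq using main h by (simp add: pos_divide_le_eq abs_divide mult.commute)
  qed
qed

lemma schwarz:
  fixes f :: "'a::real_normed_vector \<Rightarrow> real"
  assumes W: "open W" "p \<in> W" and fd: "\<And>q. q \<in> W \<Longrightarrow> f differentiable (at q)"
    and ga: "dirD f a differentiable (at p)" and gb: "dirD f b differentiable (at p)"
  shows "dirD (dirD f a) b p = dirD (dirD f b) a p"
proof (rule ccontr)
  assume ne: "dirD (dirD f a) b p \<noteq> dirD (dirD f b) a p"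
  define e where "e = \<bar>dirD (dirD f a) b p - dirD (dirD f b) a p\<bar> / 4"
  have e: "e > 0" using ne by (simp add: e_def)
  obtain d1 where d1: "d1 > 0" "\<forall>h. 0 < h \<and> h < d1 \<longrightarrow>
    \<bar>(f (p + h *\<^sub>R a + h *\<^sub>R b) - f (p + h *\<^sub>R a) - f (p + h *\<^sub>R b) + f p) / h^2 - dirD (dirD f a) b p\<bar> \<le> e"
    using schwarz_one[OF W fd ga e] by blast
  obtain d2 where d2: "d2 > 0" "\<forall>h. 0 < h \<and> h < d2 \<longrightarrow>
    \<bar>(f (p + h *\<^sub>R b + h *\<^sub>R a) - f (p + h *\<^sub>R b) - f (p + h *\<^sub>R a) + f p) / h^2 - dirD (dirD f b) a p\<bar> \<le> e"
    using schwarz_one[OF W fd gb e] by blast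
  define h where "h = min d1 d2 / 2"
  have h: "0 < h" "h < d1" "h < d2" using d1 d2 by (auto simp: h_def)
  have s: "p + h *\<^sub>R b + h *\<^sub>R a = p + h *\<^sub>R a + h *\<^sub>R b" by (simp add: algebra_simps)
  have A: "\<bar>(f (p + h *\<^sub>R a + h *\<^sub>R b) - f (p + h *\<^sub>R a) - f (p + h *\<^sub>R b) + f p) / h^2 - dirD (dirD f a) b p\<bar> \<le> e"
    using d1 h by blast
  have B: "\<bar>(f (p + h *\<^sub>R a + h *\<^sub>R b) - f (p + h *\<^sub>R a) - f (p + h *\<^sub>R b) + f p) / h^2 - dirD (dirD f b) a p\<bar> \<le> e"
    using d2 h s by (smt (verit))
  have key: "\<And>X A B::real. \<bar>X - A\<bar> \<le> \<bar>A - B\<bar> / 4 \<Longrightarrow> \<bar>X - B\<bar> \<le> \<bar>A - B\<bar> / 4 \<Longrightarrow> 0 < \<bar>A - B\<bar> / 4 \<Longrightarrow> False"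
    by (simp add: abs_le_iff abs_if split: if_splits)
  show False using key[OF A[unfolded e_def] B[unfolded e_def] e[unfolded e_def]] .
qed

lemma smooth_schwarz:
  fixes f :: "'a::real_normed_vector \<Rightarrow> real"
  assumes "open W" "p \<in> W" "smooth_on W f"
  shows "dirD (dirD f a) b p = dirD (dirD f b) a p"
  using assms by (intro schwarz[OF assms(1,2)]) (auto intro: smooth_diff smooth_dirD)


lemma matrix_inv_props:
  fixes A :: "real^'n::finite^'n"
  assumes "det A \<noteq> 0"
  shows "A ** matrix_inv A = mat 1" "matrix_inv A ** A = mat 1"
proof -
  have "invertible A" using assms invertible_det_nz by blast
  then have "\<exists>A'. A ** A' = mat 1 \<and> A' ** A = mat 1" unfolding invertible_def by blast
  then have "A ** matrix_inv A = mat 1 \<and> matrix_inv A ** A = mat 1"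
    unfolding matrix_inv_def by (rule someI_ex)
  then show "A ** matrix_inv A = mat 1" "matrix_inv A ** A = mat 1" by auto
qed

lemma matrix_inv_entry:
  fixes A :: "real^'n::finite^'n"
  assumes "det A \<noteq> 0"
  shows "matrix_inv A $ k $ j = det (\<chi> r c. if c = k then axis j 1 $ r else A $ r $ c) / det A"
proof -
  define x where "x = matrix_inv A *v axis j 1"
  have "A *v x = axis j 1"
    unfolding x_def matrix_vector_mul_assoc matrix_inv_props[OF assms] by simp
  then have "x = (\<chi> k. det (\<chi> i l. if l = k then axis j 1 $ i else A $ i $ l) / det A)"
    using cramer[OF assms] by blast
  moreover have "x $ k = matrix_inv A $ k $ j"
  proof -
    have "x $ k = (\<Sum>l\<in>UNIV. if l = j then matrix_inv A $ k $ l else 0)"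
      unfolding x_def matrix_vector_mult_def by (simp add: axis_def if_distrib cong: if_cong)
    then show ?thesis by simp
  qed
  ultimately show ?thesis by simp
qed

lemma matrix_inv_sym:
  fixes A :: "real^'n::finite^'n"
  assumes "det A \<noteq> 0" "transpose A = A"
  shows "matrix_inv A $ i $ j = matrix_inv A $ j $ i"
proof -
  let ?B = "matrix_inv A"
  have "transpose ?B ** A = mat 1"
    using matrix_inv_props(1)[OF assms(1)] assms(2)
    by (metis matrix_transpose_mul transpose_mat)
  then have "transpose ?B = ?B"
    by (metis matrix_inv_props(1)[OF assms(1)] matrix_mul_assoc matrix_mul_lid matrix_mul_rid)
  then show ?thesis by (metis transpose_def vec_lambda_beta)
qed

lemma det_row_replace:
  fixes A :: "real^'n::finite^'n"
  assumes "det A \<noteq> 0"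
  shows "det (\<chi> k l. if k = i then r $ l else A $ k $ l) = det A * (\<Sum>j\<in>UNIV. r $ j * matrix_inv A $ j $ i)"
proof -
  define x where "x = r v* matrix_inv A"
  have s: "(\<Sum>l\<in>UNIV. x $ l *s row l A) = x v* A"
    by (simp add: vec_eq_iff vector_matrix_mult_def row_def sum_component mult.commute)
  have r: "x v* A = r" unfolding x_def vector_matrix_mul_assoc matrix_inv_props[OF assms] by simp
  have m: "(\<chi> k. if k = i then (\<Sum>l\<in>UNIV. x $ l *s row l A) else row k A) = (\<chi> k l. if k = i then r $ l else A $ k $ l)"
    unfolding s r by (simp add: vec_eq_iff row_def)
  have "det (\<chi> k l. if k = i then r $ l else A $ k $ l) = x $ i * det A"
    using cramer_lemma_transpose[of i x A] unfolding m .
  moreover have "x $ i = (\<Sum>j\<in>UNIV. r $ j * matrix_inv A $ j $ i)"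
    unfolding x_def vector_matrix_mult_def by simp
  ultimately show ?thesis by simp
qed

lemma differentiable_prod:
  fixes f :: "'i \<Rightarrow> 'a::real_normed_vector \<Rightarrow> real"
  assumes "finite I" "\<And>i. i \<in> I \<Longrightarrow> f i differentiable (at p)"
  shows "(\<lambda>q. \<Prod>i\<in>I. f i q) differentiable (at p)"
  using assms by (induction I rule: finite_induct) auto

lemma dirD_prod:
  fixes f :: "'i \<Rightarrow> 'a::real_normed_vector \<Rightarrow> real"
  assumes "finite I" "\<And>i. i \<in> I \<Longrightarrow> f i differentiable (at p)"
  shows "dirD (\<lambda>q. \<Prod>i\<in>I. f i q) v p = (\<Sum>i\<in>I. dirD (f i) v p * (\<Prod>k\<in>I - {i}. f k p))"
  using assms
proof (induction I rule: finite_induct)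
  case empty then show ?case by simp
next
  case (insert x F)
  have dF: "(\<lambda>q. \<Prod>i\<in>F. f i q) differentiable (at p)"
    using insert by (intro differentiable_prod) auto
  have "dirD (\<lambda>q. \<Prod>i\<in>insert x F. f i q) v p = dirD (\<lambda>q. f x q * (\<Prod>i\<in>F. f i q)) v p"
    using insert by simp
  also have "\<dots> = f x p * dirD (\<lambda>q. \<Prod>i\<in>F. f i q) v p + dirD (f x) v p * (\<Prod>i\<in>F. f i p)"
    using insert dF by (intro dirD_mult) auto
  also have "\<dots> = f x p * (\<Sum>i\<in>F. dirD (f i) v p * (\<Prod>k\<in>F - {i}. f k p)) + dirD (f x) v p * (\<Prod>i\<in>F. f i p)"
    using insert by simp
  also have "\<dots> = (\<Sum>i\<in>insert x F. dirD (f i) v p * (\<Prod>k\<in>insert x F - {i}. f k p))"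
  proof -
    have "(\<Prod>k\<in>insert x F - {i}. f k p) = f x p * (\<Prod>k\<in>F - {i}. f k p)" if "i \<in> F" for i
    proof -
      have "insert x F - {i} = insert x (F - {i})" using that insert by auto
      then show ?thesis using insert by simp
    qed
    moreover have "insert x F - {x} = F" using insert by auto
    ultimately show ?thesis using insert
      by (simp add: sum_distrib_left algebra_simps)
  qed
  finally show ?case .
qed

lemma prod_if_one:
  fixes a b :: "'n::finite \<Rightarrow> real"
  shows "(\<Prod>k\<in>UNIV. if k = i then a k else b k) = a i * (\<Prod>k\<in>UNIV - {i}. b k)"
proof -
  have "(\<Prod>k\<in>UNIV. if k = i then a k else b k) = (if i = i then a i else b i) * (\<Prod>k\<in>UNIV - {i}. if k = i then a k else b k)"
    by (rule prod.remove) auto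
  also have "(\<Prod>k\<in>UNIV - {i}. if k = i then a k else b k) = (\<Prod>k\<in>UNIV - {i}. b k)"
    by (rule prod.cong) auto
  finally show ?thesis by simp
qed

lemma dirD_det:
  fixes M :: "'a::real_normed_vector \<Rightarrow> real^'n::finite^'n"
  assumes d: "\<And>i j. (\<lambda>q. M q $ i $ j) differentiable (at p)"
  shows "dirD (\<lambda>q. det (M q)) v p =
    (\<Sum>i\<in>UNIV. det (\<chi> k l. if k = i then dirD (\<lambda>q. M q $ k $ l) v p else M p $ k $ l))"
proof -
  let ?P = "{\<pi>. \<pi> permutes (UNIV :: 'n set)}"
  have fP: "finite ?P" by (simp add: finite_permutations)
  have "dirD (\<lambda>q. det (M q)) v p = dirD (\<lambda>q. \<Sum>\<pi>\<in>?P. of_int (sign \<pi>) * (\<Prod>i\<in>UNIV. M q $ i $ \<pi> i)) v p"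
    unfolding det_def by simp
  also have "\<dots> = (\<Sum>\<pi>\<in>?P. dirD (\<lambda>q. of_int (sign \<pi>) * (\<Prod>i\<in>UNIV. M q $ i $ \<pi> i)) v p)"
    using d by (intro dirD_sum fP) (auto intro!: differentiable_prod differentiable_mult)
  also have "\<dots> = (\<Sum>\<pi>\<in>?P. of_int (sign \<pi>) * (\<Sum>i\<in>UNIV. dirD (\<lambda>q. M q $ i $ \<pi> i) v p * (\<Prod>k\<in>UNIV - {i}. M p $ k $ \<pi> k)))"
    using d by (intro sum.cong refl) (simp add: dirD_cmult differentiable_prod dirD_prod)
  also have "\<dots> = (\<Sum>i\<in>UNIV. \<Sum>\<pi>\<in>?P. of_int (sign \<pi>) * (dirD (\<lambda>q. M q $ i $ \<pi> i) v p * (\<Prod>k\<in>UNIV - {i}. M p $ k $ \<pi> k)))"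
    by (simp add: sum_distrib_left sum.swap[of _ ?P])
  also have "\<dots> = (\<Sum>i\<in>UNIV. det (\<chi> k l. if k = i then dirD (\<lambda>q. M q $ k $ l) v p else M p $ k $ l))"
    unfolding det_def by (intro sum.cong refl) (simp add: prod_if_one)
  finally show ?thesis .
qed

lemma dirD_det_jacobi:
  fixes M :: "'a::real_normed_vector \<Rightarrow> real^'n::finite^'n"
  assumes d: "\<And>i j. (\<lambda>q. M q $ i $ j) differentiable (at p)" and nz: "det (M p) \<noteq> 0"
  shows "dirD (\<lambda>q. det (M q)) v p =
    det (M p) * (\<Sum>i\<in>UNIV. \<Sum>j\<in>UNIV. dirD (\<lambda>q. M q $ i $ j) v p * matrix_inv (M p) $ j $ i)"
proof -
  have "dirD (\<lambda>q. det (M q)) v p =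
    (\<Sum>i\<in>UNIV. det (\<chi> k l. if k = i then (\<chi> l. dirD (\<lambda>q. M q $ i $ l) v p) $ l else M p $ k $ l))"
    unfolding dirD_det[OF d] by (intro sum.cong refl arg_cong[where f=det]) (simp add: vec_eq_iff)
  also have "\<dots> = (\<Sum>i\<in>UNIV. det (M p) * (\<Sum>j\<in>UNIV. dirD (\<lambda>q. M q $ i $ j) v p * matrix_inv (M p) $ j $ i))"
    by (intro sum.cong refl) (simp add: det_row_replace[OF nz])
  finally show ?thesis by (simp add: sum_distrib_left)
qed

lemma dirD_lndet:
  fixes M :: "'a::real_normed_vector \<Rightarrow> real^'n::finite^'n"
  assumes d: "\<And>i j. (\<lambda>q. M q $ i $ j) differentiable (at p)" and nz: "det (M p) \<noteq> 0"
  shows "dirD (\<lambda>q. ln \<bar>det (M q)\<bar>) v p =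
    (\<Sum>i\<in>UNIV. \<Sum>j\<in>UNIV. dirD (\<lambda>q. M q $ i $ j) v p * matrix_inv (M p) $ j $ i)"
proof -
  have dd: "(\<lambda>q. det (M q)) differentiable (at p)"
    unfolding det_def using d by (auto intro!: differentiable_sum differentiable_prod differentiable_mult)
  show ?thesis using dirD_lnabs[OF dd, of v] nz dirD_det_jacobi[OF d nz, of v] by simp
qed


lemma smooth_det:
  fixes M :: "'a::real_normed_vector \<Rightarrow> real^'n::finite^'n"
  assumes "open W" "\<And>i j. smooth_on W (\<lambda>q. M q $ i $ j)"
  shows "smooth_on W (\<lambda>q. det (M q))"
  unfolding det_def
  by (intro smooth_sum[OF assms(1)] smooth_cmult[OF assms(1)] smooth_prod[OF assms(1)] assms(2))
     (auto simp: finite_permutations)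

lemma smooth_pd: "smooth_on W f \<Longrightarrow> smooth_on W (pd A f)"
  unfolding pd_def by (rule smooth_dirD)

lemma smooth_snd_nth: "smooth_on W (\<lambda>p::('n::finite) pt. snd p $ l)"
  by (rule smooth_linear) (auto intro: bounded_linear_compose[OF bounded_linear_vec_nth bounded_linear_snd])

lemma dirD_snd_nth: "dirD (\<lambda>p::('n::finite) pt. snd p $ l) v = (\<lambda>_. snd v $ l)"
  by (rule dirD_linear) (auto intro: bounded_linear_compose[OF bounded_linear_vec_nth bounded_linear_snd])

lemma pd_snd_nth: "pd A (\<lambda>p::('n::finite) pt. snd p $ l) = (\<lambda>_. case A of Inl i \<Rightarrow> 0 | Inr i \<Rightarrow> (if i = l then 1 else 0))"
  unfolding pd_def dirD_snd_nth cvec_def by (cases A) (auto simp: axis_def)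

lemma sum_Plus_UNIV: "(\<Sum>A\<in>(UNIV::('a::finite + 'b::finite) set). f A) = (\<Sum>i\<in>UNIV. f (Inl i)) + (\<Sum>i\<in>UNIV. f (Inr i))"
proof -
  have "(\<Sum>A\<in>(UNIV::('a + 'b) set). f A) = (\<Sum>A\<in>(UNIV <+> UNIV). f A)" by simp
  also have "\<dots> = (\<Sum>i\<in>UNIV. f (Inl i)) + (\<Sum>i\<in>UNIV. f (Inr i))"
    by (subst sum.Plus) (auto simp: o_def)
  finally show ?thesis .
qed

locale fctx =
  fixes U :: "(real^'n::finite) set" and F :: "('n::finite) pt \<Rightarrow> real" and \<sigma> :: "real^'n \<Rightarrow> real"
  assumes fins: "finsler_on U F" and sig_smooth: "smooth_on U \<sigma>" and sig_nz: "\<forall>x\<in>U. \<sigma> x \<noteq> 0"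
begin

abbreviation "W \<equiv> T0 U"
abbreviation "Q \<equiv> (\<lambda>q. (F q)^2)"

lemma openU: "open U" using fins by (simp add: finsler_on_def)

lemma openW: "open W"
  unfolding T0_def using openU by (intro open_Times) auto

lemma W_iff: "(x, y) \<in> W \<longleftrightarrow> x \<in> U \<and> y \<noteq> 0" by (simp add: T0_def)

lemma W_scale: "(x, y) \<in> W \<Longrightarrow> c > 0 \<Longrightarrow> (x, c *\<^sub>R y) \<in> W"
  by (simp add: W_iff)

lemma F_hom: "x \<in> U \<Longrightarrow> c > 0 \<Longrightarrow> F (x, c *\<^sub>R y) = c * F (x, y)"
  using fins by (simp add: finsler_on_def)

lemma sF: "smooth_on W F" using fins by (simp add: finsler_on_def)

lemma det_nz: "p \<in> W \<Longrightarrow> det (gmat F p) \<noteq> 0" using fins by (simp add: finsler_on_def)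

lemma sQ: "smooth_on W Q"
  unfolding power2_eq_square by (intro smooth_mult openW sF)

lemma fund_g_eq: "fund_g F i j = (\<lambda>p. 1/2 * Dy i (Dy j Q) p)"
  by (simp add: fund_g_def fun_eq_iff)

lemma sg: "smooth_on W (fund_g F i j)"
  unfolding fund_g_eq by (intro smooth_cmult openW smooth_pd sQ)

lemma sg': "smooth_on W (\<lambda>q. gmat F q $ i $ j)"
  unfolding gmat_def using sg by simp

lemma sdet: "smooth_on W (\<lambda>p. det (gmat F p))"
  by (intro smooth_det openW sg')

lemma pd_schwarz: "smooth_on W f \<Longrightarrow> p \<in> W \<Longrightarrow> pd A (pd B f) p = pd B (pd A f) p"
  unfolding pd_def by (rule smooth_schwarz[OF openW])

lemma gsym: "p \<in> W \<Longrightarrow> fund_g F i j p = fund_g F j i p"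
  unfolding fund_g_def using pd_schwarz[OF sQ] by simp

lemma gmat_transpose: "p \<in> W \<Longrightarrow> transpose (gmat F p) = gmat F p"
  by (simp add: transpose_def gmat_def vec_eq_iff gsym)

lemma ginv_sym: "p \<in> W \<Longrightarrow> ginv F i j p = ginv F j i p"
  unfolding ginv_def using matrix_inv_sym[OF det_nz gmat_transpose] by blast

lemma g_ginv: "p \<in> W \<Longrightarrow> (\<Sum>k\<in>UNIV. fund_g F i k p * ginv F k j p) = (if i = j then 1 else 0)"
  using matrix_inv_props(1)[OF det_nz, of p]
  by (simp add: ginv_def gmat_def matrix_matrix_mult_def mat_def vec_eq_iff)

lemma ginv_g: "p \<in> W \<Longrightarrow> (\<Sum>k\<in>UNIV. ginv F i k p * fund_g F k j p) = (if i = j then 1 else 0)"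
  using matrix_inv_props(2)[OF det_nz, of p]
  by (simp add: ginv_def gmat_def matrix_matrix_mult_def mat_def vec_eq_iff)

lemma sginv: "smooth_on W (ginv F i j)"
proof (rule smooth_cong[OF openW])
  show "smooth_on W (\<lambda>p. det (\<chi> r c. if c = i then axis j 1 $ r else gmat F p $ r $ c) * (1 / det (gmat F p)))"
  proof (intro smooth_mult openW smooth_det smooth_inverse sdet det_nz)
    fix r c
    show "smooth_on W (\<lambda>q. (\<chi> r c. if c = i then axis j 1 $ r else gmat F q $ r $ c) $ r $ c)"
      by (cases "c = i") (simp_all add: sg')
  qed (auto simp: sg')
  show "q \<in> W \<Longrightarrow> det (\<chi> r c. if c = i then axis j 1 $ r else gmat F q $ r $ c) * (1 / det (gmat F q)) = ginv F i j q" for q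
    unfolding ginv_def using matrix_inv_entry[OF det_nz, of q i j] by simp
qed

lemma spray_eq: "spray F k = (\<lambda>p. 1/4 * (\<Sum>j\<in>UNIV. ginv F k j p *
      ((\<Sum>l\<in>UNIV. Dy j (Dx l Q) p * (snd p $ l)) - Dx j Q p)))"
  by (simp add: spray_def fun_eq_iff)

lemma sspray: "smooth_on W (spray F k)"
  unfolding spray_eq
  by (intro smooth_cmult smooth_sum smooth_mult smooth_diff_fun openW sginv smooth_pd sQ smooth_snd_nth) auto

lemma Gvec_eq: "Gvec F A = (case A of Inl i \<Rightarrow> (\<lambda>p. snd p $ i) | Inr i \<Rightarrow> (\<lambda>p. - 2 * spray F i p))"
  by (cases A) (auto simp: Gvec_def fun_eq_iff)

lemma sGvec: "smooth_on W (Gvec F A)"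
proof (cases A)
  case (Inl i) then show ?thesis unfolding Gvec_eq by (simp add: smooth_snd_nth)
next
  case (Inr i) then show ?thesis unfolding Gvec_eq
    using smooth_cmult[OF openW sspray[of i], of "-2"] by simp
qed

lemma Gop_eq: "Gop F f = (\<lambda>p. \<Sum>A\<in>UNIV. Gvec F A p * pd A f p)"
  by (simp add: Gop_def fun_eq_iff)

lemma sGop: "smooth_on W f \<Longrightarrow> smooth_on W (Gop F f)"
  unfolding Gop_eq by (intro smooth_sum smooth_mult openW sGvec smooth_pd) auto

definition "Lg = (\<lambda>p. ln \<bar>det (gmat F p)\<bar>)"
definition "sg_ln = (\<lambda>p::'n pt. ln \<bar>\<sigma> (fst p)\<bar>)"

lemma sL: "smooth_on W Lg"
  unfolding Lg_def by (intro smooth_lnabs openW sdet det_nz)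

lemma ssg: "smooth_on W sg_ln"
proof -
  have "smooth_on U (\<lambda>x. ln \<bar>\<sigma> x\<bar>)"
    using sig_nz by (intro smooth_lnabs openU sig_smooth) auto
  then have "smooth_on (U \<times> (UNIV - {0})) (\<lambda>p::'n pt. ln \<bar>\<sigma> (fst p)\<bar>)"
    by (rule smooth_fst)
  then show ?thesis unfolding sg_ln_def T0_def .
qed

lemma tau_eq: "p \<in> W \<Longrightarrow> distortion F \<sigma> p = 1/2 * Lg p - 1/2 * sg_ln p"
proof -
  assume p: "p \<in> W"
  then have "fst p \<in> U" by (cases p) (simp add: W_iff)
  then have "\<sigma> (fst p) \<noteq> 0" using sig_nz by blast
  then show ?thesis using det_nz[OF p]
    by (simp add: distortion_def Lg_def sg_ln_def ln_divide_pos algebra_simps)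
qed

lemma stau: "smooth_on W (distortion F \<sigma>)"
  by (rule smooth_cong[OF openW, of "\<lambda>p. 1/2 * Lg p - 1/2 * sg_ln p"])
     (auto simp only: tau_eq intro!: smooth_diff_fun smooth_cmult openW sL ssg)

lemma sS: "smooth_on W (Scurv F \<sigma>)"
  unfolding Scurv_def by (intro sGop stau)

end


context fctx begin

definition homog :: "real \<Rightarrow> ('n pt \<Rightarrow> real) \<Rightarrow> bool" where
  "homog k f \<longleftrightarrow> (\<forall>x y c. (x, y) \<in> W \<longrightarrow> c > 0 \<longrightarrow> f (x, c *\<^sub>R y) = c powr k * f (x, y))"

lemma homogD: "homog k f \<Longrightarrow> (x, y) \<in> W \<Longrightarrow> c > 0 \<Longrightarrow> f (x, c *\<^sub>R y) = c powr k * f (x, y)"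
  unfolding homog_def by blast

lemma homog_cong: "homog k f \<Longrightarrow> (\<And>q. q \<in> W \<Longrightarrow> f q = g q) \<Longrightarrow> homog k g"
  unfolding homog_def by (metis W_scale)

lemma homog_mult: "homog k f \<Longrightarrow> homog l g \<Longrightarrow> m = k + l \<Longrightarrow> homog m (\<lambda>q. f q * g q)"
  unfolding homog_def by (simp add: powr_add)

lemma homog_add: "homog k f \<Longrightarrow> homog k g \<Longrightarrow> homog k (\<lambda>q. f q + g q)"
  unfolding homog_def by (simp add: distrib_left)

lemma homog_diff: "homog k f \<Longrightarrow> homog k g \<Longrightarrow> homog k (\<lambda>q. f q - g q)"
  unfolding homog_def by (simp add: right_diff_distrib)

lemma homog_cmult: "homog k f \<Longrightarrow> homog k (\<lambda>q. a * f q)"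
  unfolding homog_def by simp

lemma homog_sum: "finite I \<Longrightarrow> (\<And>i. i \<in> I \<Longrightarrow> homog k (f i)) \<Longrightarrow> homog k (\<lambda>q. \<Sum>i\<in>I. f i q)"
  unfolding homog_def by (simp add: sum_distrib_left)

lemma homog_const: "homog 0 (\<lambda>_. a)"
  unfolding homog_def by simp

lemma homog_snd: "homog 1 (\<lambda>p. snd p $ l)"
  unfolding homog_def by simp

lemma homog_fst: "homog 0 (\<lambda>p. h (fst p))"
  unfolding homog_def by simp

lemma homog_Dx:
  assumes h: "homog k f" and d: "\<And>q. q \<in> W \<Longrightarrow> f differentiable (at q)"
  shows "homog k (Dx j f)"
  unfolding homog_def
proof (intro allI impI)
  fix x y and c :: real assume p: "(x, y) \<in> W" and c: "c > 0"
  let ?v = "cvec (Inl j) :: 'n pt"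
  have ev: "eventually (\<lambda>t. f ((x, c *\<^sub>R y) + t *\<^sub>R ?v) = c powr k * f ((x, y) + t *\<^sub>R ?v)) (nhds 0)"
    using eventually_line_in_open[OF openW p, of ?v]
  proof (rule eventually_mono)
    fix t :: real assume "(x, y) + t *\<^sub>R ?v \<in> W"
    then have "(x + t *\<^sub>R axis j 1, y) \<in> W" by (simp add: cvec_def)
    from homogD[OF h this c] show "f ((x, c *\<^sub>R y) + t *\<^sub>R ?v) = c powr k * f ((x, y) + t *\<^sub>R ?v)"
      by (simp add: cvec_def)
  qed
  have "DERIV (\<lambda>t. c powr k * f ((x, y) + t *\<^sub>R ?v)) 0 :> c powr k * dirD f ?v (x, y)"
    by (intro DERIV_cmult dirD_DERIV d p)
  then have "deriv (\<lambda>t. f ((x, c *\<^sub>R y) + t *\<^sub>R ?v)) 0 = c powr k * dirD f ?v (x, y)"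
    using DERIV_cong_ev[OF refl ev refl] DERIV_imp_deriv by blast
  then show "Dx j f (x, c *\<^sub>R y) = c powr k * Dx j f (x, y)"
    unfolding pd_def dirD_def[of f ?v "(x, c *\<^sub>R y)"] by simp
qed

lemma homog_Dy:
  assumes h: "homog k f" and d: "\<And>q. q \<in> W \<Longrightarrow> f differentiable (at q)"
  shows "homog (k - 1) (Dy j f)"
  unfolding homog_def
proof (intro allI impI)
  fix x y and c :: real assume p: "(x, y) \<in> W" and c: "c > 0"
  let ?v = "cvec (Inr j) :: 'n pt"
  let ?w = "(1 / c) *\<^sub>R ?v"
  have ev: "eventually (\<lambda>t. f ((x, c *\<^sub>R y) + t *\<^sub>R ?v) = c powr k * f ((x, y) + t *\<^sub>R ?w)) (nhds 0)"
    using eventually_line_in_open[OF openW p, of ?w]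
  proof (rule eventually_mono)
    fix t :: real assume "(x, y) + t *\<^sub>R ?w \<in> W"
    then have m: "(x, y + (t / c) *\<^sub>R axis j 1) \<in> W" by (simp add: cvec_def)
    have e1: "(x, c *\<^sub>R y) + t *\<^sub>R ?v = (x, c *\<^sub>R (y + (t / c) *\<^sub>R axis j 1))"
      using c by (simp add: cvec_def scaleR_add_right)
    have e2: "(x, y) + t *\<^sub>R ?w = (x, y + (t / c) *\<^sub>R axis j 1)"
      by (simp add: cvec_def)
    show "f ((x, c *\<^sub>R y) + t *\<^sub>R ?v) = c powr k * f ((x, y) + t *\<^sub>R ?w)"
      unfolding e1 e2 using homogD[OF h m c] .
  qed
  have dp: "f differentiable (at (x, y))" using d p by blast
  have "DERIV (\<lambda>t. c powr k * f ((x, y) + t *\<^sub>R ?w)) 0 :> c powr k * dirD f ?w (x, y)"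
    by (intro DERIV_cmult dirD_DERIV dp)
  moreover have "dirD f ?w (x, y) = (1 / c) * dirD f ?v (x, y)"
    unfolding dirD_frechet[OF dp]
    using frechet_derivative_works[of f "at (x, y)"] dp
    by (simp add: has_derivative_bounded_linear[THEN bounded_linear.linear, THEN linear_cmul])
  ultimately have "DERIV (\<lambda>t. c powr k * f ((x, y) + t *\<^sub>R ?w)) 0 :> c powr (k - 1) * dirD f ?v (x, y)"
    using c by (simp add: powr_diff)
  then have "deriv (\<lambda>t. f ((x, c *\<^sub>R y) + t *\<^sub>R ?v)) 0 = c powr (k - 1) * dirD f ?v (x, y)"
    using DERIV_cong_ev[OF refl ev refl] DERIV_imp_deriv by blast
  then show "Dy j f (x, c *\<^sub>R y) = c powr (k - 1) * Dy j f (x, y)"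
    unfolding pd_def dirD_def[of f ?v "(x, c *\<^sub>R y)"] by simp
qed

lemma euler:
  assumes h: "homog k f" and p: "p \<in> W" and d: "f differentiable (at p)"
  shows "(\<Sum>j\<in>UNIV. snd p $ j * Dy j f p) = k * f p"
proof -
  obtain x y where xy: "p = (x, y)" by (cases p)
  let ?v = "(0, y) :: 'n pt"
  have v: "?v = (\<Sum>j\<in>UNIV. (y $ j) *\<^sub>R cvec (Inr j))"
    using basis_expansion[of y, unfolded scalar_mult_eq_scaleR]
    by (intro prod_eqI) (simp_all add: fst_sum snd_sum cvec_def)
  have bl: "linear (frechet_derivative f (at p))"
    using frechet_derivative_works[of f "at p"] d has_derivative_bounded_linear bounded_linear.linear by blast
  have A: "dirD f ?v p = (\<Sum>j\<in>UNIV. snd p $ j * Dy j f p)"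
    unfolding dirD_frechet[OF d] pd_def v xy
    using dirD_frechet[OF d[unfolded xy]] by (simp add: linear_sum[OF bl[unfolded xy]] linear_cmul[OF bl[unfolded xy]])
  have ev: "eventually (\<lambda>t. f (p + t *\<^sub>R ?v) = (1 + t) powr k * f p) (nhds 0)"
  proof -
    have "eventually (\<lambda>t::real. t > -1) (nhds 0)"
      unfolding eventually_nhds_metric dist_real_def by (intro exI[of _ 1]) auto
    then show ?thesis
    proof (rule eventually_mono)
      fix t :: real assume t: "t > -1"
      have "p + t *\<^sub>R ?v = (x, (1 + t) *\<^sub>R y)" unfolding xy by (simp add: algebra_simps)
      then show "f (p + t *\<^sub>R ?v) = (1 + t) powr k * f p"
        using homogD[OF h p[unfolded xy], of "1 + t"] t xy by simp
    qed
  qed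
  have "DERIV (\<lambda>t. (1 + t) powr k * f p) 0 :> k * f p"
    by (auto intro!: derivative_eq_intros)
  then have "dirD f ?v p = k * f p"
    unfolding dirD_def using DERIV_cong_ev[OF refl ev refl] DERIV_imp_deriv by blast
  then show ?thesis using A by simp
qed

end


context fctx begin

abbreviation "S \<equiv> Scurv F \<sigma>"
abbreviation "tau \<equiv> distortion F \<sigma>"

lemma homog_Dy': "homog k f \<Longrightarrow> smooth_on W f \<Longrightarrow> k' = k - 1 \<Longrightarrow> homog k' (Dy j f)"
  using homog_Dy smooth_diff by blast

lemma homog_Dx': "homog k f \<Longrightarrow> smooth_on W f \<Longrightarrow> homog k (Dx j f)"
  using homog_Dx smooth_diff by blast

lemma hQ: "homog 2 Q"
  unfolding homog_def
proof (intro allI impI)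
  fix x y and c :: real assume "(x, y) \<in> W" "c > 0"
  then have "F (x, c *\<^sub>R y) = c * F (x, y)" using F_hom by (simp add: W_iff)
  then show "(F (x, c *\<^sub>R y))\<^sup>2 = c powr 2 * (F (x, y))\<^sup>2"
    using \<open>c > 0\<close> by (simp add: power_mult_distrib)
qed

lemma hg: "homog 0 (fund_g F i j)"
  unfolding fund_g_eq
  by (intro homog_cmult homog_Dy'[OF homog_Dy'[OF hQ sQ refl]] smooth_pd sQ) simp

lemma gmat_hom: "(x, y) \<in> W \<Longrightarrow> c > 0 \<Longrightarrow> gmat F (x, c *\<^sub>R y) = gmat F (x, y)"
  using homogD[OF hg] by (simp add: gmat_def vec_eq_iff)

lemma hginv: "homog 0 (ginv F i j)"
  unfolding homog_def ginv_def using gmat_hom by simp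

lemma hspray: "homog 2 (spray F k)"
  unfolding spray_eq
proof (intro homog_cmult homog_sum finite_UNIV)
  fix j
  have a: "homog 2 (\<lambda>p. \<Sum>l\<in>UNIV. Dy j (Dx l Q) p * (snd p $ l))"
  proof (intro homog_sum finite_UNIV)
    fix l
    show "homog 2 (\<lambda>p. Dy j (Dx l Q) p * (snd p $ l))"
      by (rule homog_mult[OF homog_Dy'[OF homog_Dx'[OF hQ sQ] smooth_pd[OF sQ]] homog_snd]) simp_all
  qed simp
  have b: "homog 2 (Dx j Q)" by (rule homog_Dx'[OF hQ sQ])
  show "homog 2 (\<lambda>p. ginv F k j p * ((\<Sum>l\<in>UNIV. Dy j (Dx l Q) p * (snd p $ l)) - Dx j Q p))"
    by (rule homog_mult[OF hginv homog_diff[OF a b]]) simp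
qed simp

lemma htau: "homog 0 tau"
  unfolding homog_def distortion_def using gmat_hom by simp

lemma hS: "homog 1 S"
  unfolding Scurv_def Gop_eq
proof (intro homog_sum finite_UNIV)
  fix A :: "'n + 'n"
  show "homog 1 (\<lambda>p. Gvec F A p * pd A tau p)"
  proof (cases A)
    case (Inl i)
    show ?thesis unfolding Inl Gvec_def
      by (simp, rule homog_mult[OF homog_snd homog_Dx'[OF htau stau]]) simp
  next
    case (Inr i)
    have "homog 1 (\<lambda>p. (- 2 * spray F i p) * Dy i tau p)"
      by (rule homog_mult[OF homog_cmult[OF hspray] homog_Dy'[OF htau stau refl]]) simp
    then show ?thesis unfolding Inr Gvec_def by simp
  qed
qed simp

lemma hSm: "homog 0 (Dy m S)"
  by (rule homog_Dy'[OF hS sS]) simp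

lemma E1: "p \<in> W \<Longrightarrow> (\<Sum>j\<in>UNIV. snd p $ j * Dy j (spray F m) p) = 2 * spray F m p"
  using euler[OF hspray] smooth_diff[OF sspray] by blast

lemma E2: "p \<in> W \<Longrightarrow> (\<Sum>j\<in>UNIV. snd p $ j * Dy j S p) = S p"
  using euler[OF hS] smooth_diff[OF sS] by simp

lemma E3: "p \<in> W \<Longrightarrow> (\<Sum>j\<in>UNIV. snd p $ j * Dy j (Dy m S) p) = 0"
  using euler[OF hSm] smooth_diff[OF smooth_pd[OF sS]] by simp

end


lemma pd_add: "f differentiable (at p) \<Longrightarrow> g differentiable (at p) \<Longrightarrow> pd A (\<lambda>q. f q + g q) p = pd A f p + pd A g p"
  unfolding pd_def by (rule dirD_add)
lemma pd_diff: "f differentiable (at p) \<Longrightarrow> g differentiable (at p) \<Longrightarrow> pd A (\<lambda>q. f q - g q) p = pd A f p - pd A g p"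
  unfolding pd_def by (rule dirD_diff)
lemma pd_mult: "f differentiable (at p) \<Longrightarrow> g differentiable (at p) \<Longrightarrow> pd A (\<lambda>q. f q * g q) p = f p * pd A g p + pd A f p * g p"
  unfolding pd_def by (rule dirD_mult)
lemma pd_cmult: "f differentiable (at p) \<Longrightarrow> pd A (\<lambda>q. c * f q) p = c * pd A f p"
  unfolding pd_def by (rule dirD_cmult)
lemma pd_sum: "finite I \<Longrightarrow> (\<And>i. i \<in> I \<Longrightarrow> f i differentiable (at p)) \<Longrightarrow> pd A (\<lambda>q. \<Sum>i\<in>I. f i q) p = (\<Sum>i\<in>I. pd A (f i) p)"
  unfolding pd_def by (rule dirD_sum)

lemma sum_delta_r: "(\<Sum>l\<in>(UNIV::'a::finite set). X l * (if l = m then 1 else 0)) = (X m :: real)"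
proof -
  have "(\<Sum>l\<in>UNIV. X l * (if l = m then 1 else 0)) = (\<Sum>l\<in>UNIV. if l = m then X l else 0)"
    by (rule sum.cong) auto
  then show ?thesis by simp
qed

lemma sum_delta_l: "(\<Sum>l\<in>(UNIV::'a::finite set). (if m = l then 1 else 0) * X l) = (X m :: real)"
proof -
  have "(\<Sum>l\<in>UNIV. (if m = l then 1 else 0) * X l) = (\<Sum>l\<in>UNIV. if l = m then X l else 0)"
    by (rule sum.cong) auto
  then show ?thesis by simp
qed

context fctx begin

lemma pd_local: "p \<in> W \<Longrightarrow> (\<And>q. q \<in> W \<Longrightarrow> f q = g q) \<Longrightarrow> pd A f p = pd A g p"
  unfolding pd_def using dirD_local[OF openW] by blast

lemma sdiff: "smooth_on W f \<Longrightarrow> p \<in> W \<Longrightarrow> f differentiable (at p)"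
  by (rule smooth_diff)

lemma Gop_split: "Gop F f p = (\<Sum>l\<in>UNIV. snd p $ l * Dx l f p) + (\<Sum>k\<in>UNIV. (- 2 * spray F k p) * Dy k f p)"
  unfolding Gop_eq sum_Plus_UNIV by (simp add: Gvec_def)

definition "Ej j = (\<lambda>p. (\<Sum>l\<in>UNIV. Dy j (Dx l Q) p * snd p $ l) - Dx j Q p)"

lemma sEj: "smooth_on W (Ej j)"
  unfolding Ej_def
  by (intro smooth_sum smooth_mult smooth_diff_fun openW smooth_pd sQ smooth_snd_nth) auto

lemma spray_Ej: "spray F k p = 1/4 * (\<Sum>j\<in>UNIV. ginv F k j p * Ej j p)"
  by (simp add: spray_def Ej_def)

lemma K1: "q \<in> W \<Longrightarrow> (\<Sum>k\<in>UNIV. fund_g F i k q * spray F k q) = 1/4 * Ej i q"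
proof -
  assume q: "q \<in> W"
  have "(\<Sum>k\<in>UNIV. fund_g F i k q * spray F k q) = (\<Sum>k\<in>UNIV. \<Sum>j\<in>UNIV. 1/4 * (fund_g F i k q * ginv F k j q * Ej j q))"
    unfolding spray_Ej sum_distrib_left by (intro sum.cong refl) (simp add: ac_simps)
  also have "\<dots> = (\<Sum>j\<in>UNIV. \<Sum>k\<in>UNIV. 1/4 * (fund_g F i k q * ginv F k j q * Ej j q))"
    by (rule sum.swap)
  also have "\<dots> = (\<Sum>j\<in>UNIV. 1/4 * ((\<Sum>k\<in>UNIV. fund_g F i k q * ginv F k j q) * Ej j q))"
    by (simp only: sum_distrib_left sum_distrib_right)
  also have "\<dots> = (\<Sum>j\<in>UNIV. 1/4 * ((if i = j then 1 else 0) * Ej j q))"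
    using g_ginv[OF q] by simp
  also have "\<dots> = 1/4 * Ej i q"
    by (simp only: sum_distrib_left[symmetric] sum_delta_l)
  finally show ?thesis .
qed

lemma K2: "p \<in> W \<Longrightarrow> (\<Sum>k\<in>UNIV. Dy m (fund_g F i k) p * spray F k p + fund_g F i k p * Dy m (spray F k) p) = 1/4 * Dy m (Ej i) p"
proof -
  assume p: "p \<in> W"
  have "Dy m (\<lambda>q. \<Sum>k\<in>UNIV. fund_g F i k q * spray F k q) p = Dy m (\<lambda>q. 1/4 * Ej i q) p"
    using K1 by (intro pd_local[OF p]) auto
  moreover have "Dy m (\<lambda>q. \<Sum>k\<in>UNIV. fund_g F i k q * spray F k q) p =
      (\<Sum>k\<in>UNIV. fund_g F i k p * Dy m (spray F k) p + Dy m (fund_g F i k) p * spray F k p)"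
    using p by (simp add: pd_sum pd_mult sdiff sg sspray differentiable_mult)
  moreover have "Dy m (\<lambda>q. 1/4 * Ej i q) p = 1/4 * Dy m (Ej i) p"
    by (rule pd_cmult[OF sdiff[OF sEj p]])
  ultimately show ?thesis by (simp add: add.commute)
qed

lemma pd_snd: "pd (Inr m) (\<lambda>p. snd p $ l) q = (if l = m then 1 else 0)"
  by (simp add: pd_snd_nth)

lemma pd_snd_x: "pd (Inl m) (\<lambda>p. snd p $ l) q = 0"
  by (simp add: pd_snd_nth)

lemma K3: "p \<in> W \<Longrightarrow> Dy m (Ej i) p = (\<Sum>l\<in>UNIV. Dy m (Dy i (Dx l Q)) p * snd p $ l) + (Dy i (Dx m Q) p - Dy m (Dx i Q) p)"
proof -
  assume p: "p \<in> W"
  have d1: "(\<lambda>q. Dy i (Dx l Q) q * snd q $ l) differentiable (at p)" for l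
    using p by (intro differentiable_mult sdiff smooth_pd sQ smooth_snd_nth)
  have d2: "(\<lambda>q. \<Sum>l\<in>UNIV. Dy i (Dx l Q) q * snd q $ l) differentiable (at p)"
    using d1 by (intro differentiable_sum) auto
  have "Dy m (Ej i) p = (\<Sum>l\<in>UNIV. Dy m (\<lambda>q. Dy i (Dx l Q) q * snd q $ l) p) - Dy m (Dx i Q) p"
    unfolding Ej_def using p d1 d2 by (simp add: pd_diff pd_sum sdiff smooth_pd sQ)
  also have "\<dots> = (\<Sum>l\<in>UNIV. Dy i (Dx l Q) p * (if l = m then 1 else 0) + Dy m (Dy i (Dx l Q)) p * snd p $ l) - Dy m (Dx i Q) p"
    using p by (simp add: pd_mult sdiff smooth_pd sQ smooth_snd_nth pd_snd)
  also have "\<dots> = (\<Sum>l\<in>UNIV. Dy m (Dy i (Dx l Q)) p * snd p $ l) + (Dy i (Dx m Q) p - Dy m (Dx i Q) p)"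
    by (simp only: sum.distrib sum_delta_r)
  finally show ?thesis .
qed

lemma Y3a: "p \<in> W \<Longrightarrow> Dy a (Dy b (Dy c Q)) p = Dy b (Dy a (Dy c Q)) p"
  by (rule pd_schwarz[OF smooth_pd[OF sQ]])

lemma Y3b: "p \<in> W \<Longrightarrow> Dy a (Dy b (Dy c Q)) p = Dy a (Dy c (Dy b Q)) p"
  by (rule pd_local) (auto intro: pd_schwarz[OF sQ])

lemma XYY: "p \<in> W \<Longrightarrow> Dy m (Dy i (Dx l Q)) p = Dx l (Dy m (Dy i Q)) p"
proof -
  assume p: "p \<in> W"
  have "Dy m (Dy i (Dx l Q)) p = Dy m (Dx l (Dy i Q)) p"
    by (rule pd_local[OF p]) (auto intro: pd_schwarz[OF sQ])
  also have "\<dots> = Dx l (Dy m (Dy i Q)) p"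
    by (rule pd_schwarz[OF smooth_pd[OF sQ] p])
  finally show ?thesis .
qed

lemma pd_g: "p \<in> W \<Longrightarrow> pd A (fund_g F i j) p = 1/2 * pd A (Dy i (Dy j Q)) p"
  unfolding fund_g_eq using pd_cmult sdiff smooth_pd sQ by blast

lemma pd_Lg: "p \<in> W \<Longrightarrow> pd A Lg p = (\<Sum>i\<in>UNIV. \<Sum>j\<in>UNIV. pd A (fund_g F i j) p * ginv F j i p)"
proof -
  assume p: "p \<in> W"
  have "pd A Lg p = (\<Sum>i\<in>UNIV. \<Sum>j\<in>UNIV. dirD (\<lambda>q. gmat F q $ i $ j) (cvec A) p * matrix_inv (gmat F p) $ j $ i)"
    unfolding pd_def Lg_def
    by (rule dirD_lndet) (use p sdiff[OF sg'] det_nz in auto)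
  then show ?thesis by (simp add: pd_def gmat_def ginv_def)
qed

end


lemma swap3:
  fixes f :: "'a \<Rightarrow> real"
  shows "(\<Sum>l\<in>A. f l * (\<Sum>i\<in>B. \<Sum>j\<in>C. h l i j)) = (\<Sum>i\<in>B. \<Sum>j\<in>C. \<Sum>l\<in>A. f l * h l i j)"
proof -
  have "(\<Sum>l\<in>A. f l * (\<Sum>i\<in>B. \<Sum>j\<in>C. h l i j)) = (\<Sum>l\<in>A. \<Sum>i\<in>B. \<Sum>j\<in>C. f l * h l i j)"
    by (simp add: sum_distrib_left)
  also have "\<dots> = (\<Sum>i\<in>B. \<Sum>l\<in>A. \<Sum>j\<in>C. f l * h l i j)"
    by (rule sum.swap)
  also have "\<dots> = (\<Sum>i\<in>B. \<Sum>j\<in>C. \<Sum>l\<in>A. f l * h l i j)"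
    by (rule sum.cong[OF refl], rule sum.swap)
  finally show ?thesis .
qed

lemma swap2:
  fixes w :: "'a \<Rightarrow> real"
  shows "(\<Sum>k\<in>A. (\<Sum>i\<in>B. u i * v i k) * w k) = (\<Sum>i\<in>B. u i * (\<Sum>k\<in>A. v i k * w k))"
proof -
  have "(\<Sum>k\<in>A. (\<Sum>i\<in>B. u i * v i k) * w k) = (\<Sum>k\<in>A. \<Sum>i\<in>B. u i * (v i k * w k))"
    by (simp add: sum_distrib_right mult.assoc)
  also have "\<dots> = (\<Sum>i\<in>B. \<Sum>k\<in>A. u i * (v i k * w k))"
    by (rule sum.swap)
  also have "\<dots> = (\<Sum>i\<in>B. u i * (\<Sum>k\<in>A. v i k * w k))"
    by (simp add: sum_distrib_left)
  finally show ?thesis .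
qed

lemma sum2_cmult:
  fixes X :: "'a \<Rightarrow> 'b \<Rightarrow> real"
  shows "c * (\<Sum>m\<in>A. \<Sum>i\<in>B. X m i) = (\<Sum>m\<in>A. \<Sum>i\<in>B. c * X m i)"
  by (simp add: sum_distrib_left)

context fctx begin

lemma key_identity: "p \<in> W \<Longrightarrow> Gop F Lg p = 2 * (\<Sum>m\<in>UNIV. Dy m (spray F m) p)"
proof -
  assume p: "p \<in> W"
  define gi where "gi i j = ginv F i j p" for i j
  define gg where "gg i j = fund_g F i j p" for i j
  define G where "G k = spray F k p" for k
  define DG where "DG k m = Dy m (spray F k) p" for k m
  define c where "c k i j = Dy k (fund_g F i j) p" for k i j
  define a where "a i j = (\<Sum>l\<in>UNIV. snd p $ l * Dx l (fund_g F i j) p)" for i j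
  define \<omega> where "\<omega> m i = Dy i (Dx m Q) p - Dy m (Dx i Q) p" for m i
  have f1: "gi i j = gi j i" for i j unfolding gi_def using ginv_sym[OF p] by blast
  have f2a: "c k i j = c i k j" for k i j
    unfolding c_def pd_g[OF p] using Y3a[OF p] by simp
  have f2b: "c k i j = c k j i" for k i j
    unfolding c_def pd_g[OF p] using Y3b[OF p] by simp
  have f3: "(\<Sum>k\<in>UNIV. gi i k * gg k j) = (if i = j then 1 else 0)" for i j
    unfolding gi_def gg_def using ginv_g[OF p] by simp
  have f4: "(\<Sum>k\<in>UNIV. c m i k * G k + gg i k * DG k m) = 1/4 * Dy m (Ej i) p" for m i
    unfolding c_def G_def gg_def DG_def using K2[OF p] by simp
  have f5: "Dy m (Ej i) p = 2 * a m i + \<omega> m i" for m i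
  proof -
    have "(\<Sum>l\<in>UNIV. Dy m (Dy i (Dx l Q)) p * snd p $ l) = 2 * a m i"
      unfolding a_def sum_distrib_left
      by (intro sum.cong refl) (simp add: XYY[OF p] pd_g[OF p])
    then show ?thesis unfolding K3[OF p] \<omega>_def by simp
  qed
  have f6: "\<omega> m i = - \<omega> i m" for m i unfolding \<omega>_def by simp
  have cc: "c k i j = c i j k" for k i j using f2a[of k i j] f2b[of i k j] by (rule trans)
  have Lhs: "Gop F Lg p = (\<Sum>m\<in>UNIV. \<Sum>i\<in>UNIV. gi m i * (a m i - 2 * (\<Sum>k\<in>UNIV. c m i k * G k)))"
  proof -
    have A1: "(\<Sum>i\<in>UNIV. \<Sum>j\<in>UNIV. \<Sum>l\<in>UNIV. snd p $ l * (pd (Inl l) (fund_g F i j) p * ginv F j i p))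
        = (\<Sum>i\<in>UNIV. \<Sum>j\<in>UNIV. gi j i * a i j)"
      unfolding gi_def a_def sum_distrib_left by (intro sum.cong refl) (simp only: ac_simps)
    have A2: "(\<Sum>i\<in>UNIV. \<Sum>j\<in>UNIV. \<Sum>k\<in>UNIV. (- 2 * spray F k p) * (pd (Inr k) (fund_g F i j) p * ginv F j i p))
        = (\<Sum>i\<in>UNIV. \<Sum>j\<in>UNIV. gi j i * (- 2 * (\<Sum>k\<in>UNIV. G k * c k i j)))"
      unfolding gi_def G_def c_def sum_distrib_left by (intro sum.cong refl) (simp only: ac_simps)
    have A3: "gi j i * (a i j - 2 * (\<Sum>k\<in>UNIV. G k * c k i j)) = gi j i * a i j + gi j i * (- 2 * (\<Sum>k\<in>UNIV. G k * c k i j))" for i j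
      by (simp only: right_diff_distrib minus_mult_left[symmetric] distrib_left diff_conv_add_uminus)
    have A4: "gi j i * (a i j - 2 * (\<Sum>k\<in>UNIV. G k * c k i j)) = gi i j * (a i j - 2 * (\<Sum>k\<in>UNIV. c i j k * G k))" for i j
    proof -
      have "(\<Sum>k\<in>UNIV. G k * c k i j) = (\<Sum>k\<in>UNIV. c i j k * G k)"
        by (rule sum.cong[OF refl]) (subst cc, rule mult.commute)
      then show ?thesis using f1[of j i] by simp
    qed
    have "Gop F Lg p = (\<Sum>l\<in>UNIV. snd p $ l * (\<Sum>i\<in>UNIV. \<Sum>j\<in>UNIV. pd (Inl l) (fund_g F i j) p * ginv F j i p))
        + (\<Sum>k\<in>UNIV. (- 2 * spray F k p) * (\<Sum>i\<in>UNIV. \<Sum>j\<in>UNIV. pd (Inr k) (fund_g F i j) p * ginv F j i p))"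
      unfolding Gop_split pd_Lg[OF p] ..
    also have "\<dots> = (\<Sum>i\<in>UNIV. \<Sum>j\<in>UNIV. \<Sum>l\<in>UNIV. snd p $ l * (pd (Inl l) (fund_g F i j) p * ginv F j i p))
        + (\<Sum>i\<in>UNIV. \<Sum>j\<in>UNIV. \<Sum>k\<in>UNIV. (- 2 * spray F k p) * (pd (Inr k) (fund_g F i j) p * ginv F j i p))"
      by (simp only: swap3)
    also have "\<dots> = (\<Sum>i\<in>UNIV. \<Sum>j\<in>UNIV. gi j i * a i j) + (\<Sum>i\<in>UNIV. \<Sum>j\<in>UNIV. gi j i * (- 2 * (\<Sum>k\<in>UNIV. G k * c k i j)))"
      unfolding A1 A2 ..
    also have "\<dots> = (\<Sum>i\<in>UNIV. \<Sum>j\<in>UNIV. gi j i * (a i j - 2 * (\<Sum>k\<in>UNIV. G k * c k i j)))"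
      unfolding A3 sum.distrib ..
    also have "\<dots> = (\<Sum>m\<in>UNIV. \<Sum>i\<in>UNIV. gi m i * (a m i - 2 * (\<Sum>k\<in>UNIV. c m i k * G k)))"
      unfolding A4 ..
    finally show ?thesis .
  qed
  have Rhs: "(\<Sum>m\<in>UNIV. DG m m) = (\<Sum>m\<in>UNIV. \<Sum>i\<in>UNIV. gi m i * (1/4 * Dy m (Ej i) p - (\<Sum>k\<in>UNIV. c m i k * G k)))"
  proof -
    have "(\<Sum>m\<in>UNIV. DG m m) = (\<Sum>m\<in>UNIV. \<Sum>k\<in>UNIV. (if m = k then 1 else 0) * DG k m)"
      by (simp only: sum_delta_l)
    also have "\<dots> = (\<Sum>m\<in>UNIV. \<Sum>k\<in>UNIV. (\<Sum>i\<in>UNIV. gi m i * gg i k) * DG k m)"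
      by (simp only: f3)
    also have "\<dots> = (\<Sum>m\<in>UNIV. \<Sum>i\<in>UNIV. gi m i * (\<Sum>k\<in>UNIV. gg i k * DG k m))"
      by (simp only: swap2)
    also have "\<dots> = (\<Sum>m\<in>UNIV. \<Sum>i\<in>UNIV. gi m i * (1/4 * Dy m (Ej i) p - (\<Sum>k\<in>UNIV. c m i k * G k)))"
    proof -
      have "(\<Sum>k\<in>UNIV. gg i k * DG k m) = 1/4 * Dy m (Ej i) p - (\<Sum>k\<in>UNIV. c m i k * G k)" for i m
        using f4[of m i] by (simp add: sum.distrib)
      then show ?thesis by simp
    qed
    finally show ?thesis .
  qed
  have pw: "gi m i * \<omega> m i = - (gi i m * \<omega> i m)" for m i
    using f1[of m i] f6[of m i] by simp
  have om0: "(\<Sum>m\<in>UNIV. \<Sum>i\<in>UNIV. gi m i * \<omega> m i) = 0"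
  proof -
    have "(\<Sum>m\<in>UNIV. \<Sum>i\<in>UNIV. gi m i * \<omega> m i) = (\<Sum>i\<in>UNIV. \<Sum>m\<in>UNIV. gi m i * \<omega> m i)"
      by (rule sum.swap)
    also have "\<dots> = (\<Sum>i\<in>UNIV. \<Sum>m\<in>UNIV. - (gi i m * \<omega> i m))"
      by (rule sum.cong[OF refl], rule sum.cong[OF refl], rule pw)
    also have "\<dots> = - (\<Sum>m\<in>UNIV. \<Sum>i\<in>UNIV. gi m i * \<omega> m i)"
      by (simp only: sum_negf)
    finally show ?thesis by simp
  qed
  have fin: "2 * (\<Sum>m\<in>UNIV. DG m m) = (\<Sum>m\<in>UNIV. \<Sum>i\<in>UNIV. gi m i * (a m i - 2 * (\<Sum>k\<in>UNIV. c m i k * G k))) + 1/2 * (\<Sum>m\<in>UNIV. \<Sum>i\<in>UNIV. gi m i * \<omega> m i)"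
  proof -
    have "2 * (\<Sum>m\<in>UNIV. DG m m) = (\<Sum>m\<in>UNIV. \<Sum>i\<in>UNIV. 2 * (gi m i * (1/4 * Dy m (Ej i) p - (\<Sum>k\<in>UNIV. c m i k * G k))))"
      unfolding Rhs by (rule sum2_cmult)
    also have "\<dots> = (\<Sum>m\<in>UNIV. \<Sum>i\<in>UNIV. gi m i * (a m i - 2 * (\<Sum>k\<in>UNIV. c m i k * G k)) + 1/2 * (gi m i * \<omega> m i))"
      by (intro sum.cong refl) (simp add: f5 algebra_simps)
    also have "\<dots> = (\<Sum>m\<in>UNIV. \<Sum>i\<in>UNIV. gi m i * (a m i - 2 * (\<Sum>k\<in>UNIV. c m i k * G k)))
        + (\<Sum>m\<in>UNIV. \<Sum>i\<in>UNIV. 1/2 * (gi m i * \<omega> m i))"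
      by (simp only: sum.distrib)
    also have "\<dots> = (\<Sum>m\<in>UNIV. \<Sum>i\<in>UNIV. gi m i * (a m i - 2 * (\<Sum>k\<in>UNIV. c m i k * G k)))
        + 1/2 * (\<Sum>m\<in>UNIV. \<Sum>i\<in>UNIV. gi m i * \<omega> m i)"
      by (simp only: sum2_cmult)
    finally show ?thesis .
  qed
  show ?thesis using fin unfolding Lhs om0 DG_def by simp
qed

end


lemma sum_delta_l': "(\<Sum>l\<in>(UNIV::'a::finite set). (if l = m then 1 else 0) * X l) = (X m :: real)"
proof -
  have "(\<Sum>l\<in>(UNIV::'a set). (if l = m then 1 else 0) * X l) = (\<Sum>l\<in>UNIV. if l = m then X l else 0)"
    by (rule sum.cong) auto
  then show ?thesis by simp
qed

lemma sum_delta_r': "(\<Sum>l\<in>(UNIV::'a::finite set). X l * (if m = l then 1 else 0)) = (X m :: real)"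
proof -
  have "(\<Sum>l\<in>(UNIV::'a set). X l * (if m = l then 1 else 0)) = (\<Sum>l\<in>UNIV. if l = m then X l else 0)"
    by (rule sum.cong) auto
  then show ?thesis by simp
qed

context fctx begin

definition dl :: "'n \<Rightarrow> ('n pt \<Rightarrow> real) \<Rightarrow> 'n pt \<Rightarrow> real" where
  "dl k f p = Dx k f p - (\<Sum>j\<in>UNIV. nlc F j k p * Dy j f p)"

lemma Gop_fun: "Gop F f = (\<lambda>q. (\<Sum>l\<in>UNIV. snd q $ l * Dx l f q) + (\<Sum>m\<in>UNIV. (- 2 * spray F m q) * Dy m f q))"
  using Gop_split by blast

lemma DyGop:
  assumes f: "smooth_on W f" and p: "p \<in> W"
  shows "Dy k (Gop F f) p = Dx k f p + (\<Sum>l\<in>UNIV. snd p $ l * Dy k (Dx l f) p)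
     - 2 * (\<Sum>m\<in>UNIV. nlc F m k p * Dy m f p) - 2 * (\<Sum>m\<in>UNIV. spray F m p * Dy k (Dy m f) p)"
proof -
  have d1: "(\<lambda>q. snd q $ l * Dx l f q) differentiable (at p)" for l
    by (intro differentiable_mult sdiff[OF _ p] smooth_snd_nth smooth_pd f)
  have d2: "(\<lambda>q. (- 2 * spray F m q) * Dy m f q) differentiable (at p)" for m
    by (intro differentiable_mult sdiff[OF _ p] smooth_cmult openW sspray smooth_pd f)
  have t1: "Dy k (\<lambda>q. snd q $ l * Dx l f q) p = snd p $ l * Dy k (Dx l f) p + (if l = k then 1 else 0) * Dx l f p" for l
    by (simp add: pd_mult sdiff[OF _ p] smooth_snd_nth smooth_pd f pd_snd)
  have t2: "Dy k (\<lambda>q. (- 2 * spray F m q) * Dy m f q) p = (- 2 * spray F m p) * Dy k (Dy m f) p + (- 2 * nlc F m k p) * Dy m f p" for m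
  proof -
    have "Dy k (\<lambda>q. (- 2 * spray F m q)) p = - 2 * nlc F m k p"
      unfolding nlc_def by (rule pd_cmult[OF sdiff[OF sspray p]])
    moreover have "Dy k (\<lambda>q. (- 2 * spray F m q) * Dy m f q) p = (- 2 * spray F m p) * Dy k (Dy m f) p + Dy k (\<lambda>q. (- 2 * spray F m q)) p * Dy m f p"
      by (rule pd_mult[OF sdiff[OF smooth_cmult[OF openW sspray] p] sdiff[OF smooth_pd[OF f] p]])
    ultimately show ?thesis by simp
  qed
  have "Dy k (Gop F f) p = (\<Sum>l\<in>UNIV. Dy k (\<lambda>q. snd q $ l * Dx l f q) p) + (\<Sum>m\<in>UNIV. Dy k (\<lambda>q. (- 2 * spray F m q) * Dy m f q) p)"
    unfolding Gop_fun using d1 d2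
    by (simp add: pd_add pd_sum differentiable_sum)
  also have "\<dots> = (\<Sum>l\<in>UNIV. snd p $ l * Dy k (Dx l f) p) + Dx k f p
     + ((\<Sum>m\<in>UNIV. (- 2 * spray F m p) * Dy k (Dy m f) p) + (\<Sum>m\<in>UNIV. (- 2 * nlc F m k p) * Dy m f p))"
    unfolding t1 t2 sum.distrib sum_delta_l' ..
  also have "\<dots> = Dx k f p + (\<Sum>l\<in>UNIV. snd p $ l * Dy k (Dx l f) p)
     - 2 * (\<Sum>m\<in>UNIV. nlc F m k p * Dy m f p) - 2 * (\<Sum>m\<in>UNIV. spray F m p * Dy k (Dy m f) p)"
    by (simp add: sum_distrib_left sum_negf[symmetric] ac_simps)
  finally show ?thesis .
qed

lemma XS: "p \<in> W \<Longrightarrow> (\<Sum>j\<in>UNIV. snd p $ j * Dx i (Dy j S) p) = Dx i S p"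
proof -
  assume p: "p \<in> W"
  have "Dx i S p = Dx i (\<lambda>q. \<Sum>j\<in>UNIV. snd q $ j * Dy j S q) p"
    using E2 by (intro pd_local[OF p]) auto
  also have "\<dots> = (\<Sum>j\<in>UNIV. snd p $ j * Dx i (Dy j S) p)"
    by (simp add: pd_sum pd_mult differentiable_mult sdiff[OF _ p] smooth_snd_nth smooth_pd sS pd_snd_x)
  finally show ?thesis by simp
qed

lemma YS: "p \<in> W \<Longrightarrow> (\<Sum>j\<in>UNIV. snd p $ j * Dy i (Dy j S) p) = 0"
proof -
  assume p: "p \<in> W"
  have "Dy i (Dy j S) p = Dy j (Dy i S) p" for j by (rule pd_schwarz[OF sS p])
  then show ?thesis using E3[OF p, of i] by simp
qed

lemma chi_eq: "chi F \<sigma> i p = 1/2 * (Gop F (Dy i S) p - Dx i S p)"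
  by (simp add: chi_def)

lemma chi_contract: "p \<in> W \<Longrightarrow> 2 * chi F \<sigma> i p = (\<Sum>j\<in>UNIV. snd p $ j * (dl j (Dy i S) p - dl i (Dy j S) p))"
proof -
  assume p: "p \<in> W"
  have N: "(\<Sum>j\<in>UNIV. snd p $ j * nlc F m j p) = 2 * spray F m p" for m
    using E1[OF p, of m] by (simp add: nlc_def)
  have A: "(\<Sum>j\<in>UNIV. snd p $ j * dl j (Dy i S) p) = Gop F (Dy i S) p"
  proof -
    have "(\<Sum>j\<in>UNIV. snd p $ j * dl j (Dy i S) p)
        = (\<Sum>j\<in>UNIV. snd p $ j * Dx j (Dy i S) p) - (\<Sum>j\<in>UNIV. \<Sum>m\<in>UNIV. snd p $ j * (nlc F m j p * Dy m (Dy i S) p))"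
      unfolding dl_def by (simp only: right_diff_distrib sum_subtractf sum_distrib_left)
    also have "\<dots> = (\<Sum>j\<in>UNIV. snd p $ j * Dx j (Dy i S) p) - (\<Sum>m\<in>UNIV. \<Sum>j\<in>UNIV. snd p $ j * (nlc F m j p * Dy m (Dy i S) p))"
      by (subst sum.swap) (rule refl)
    also have "\<dots> = (\<Sum>j\<in>UNIV. snd p $ j * Dx j (Dy i S) p) - (\<Sum>m\<in>UNIV. (\<Sum>j\<in>UNIV. snd p $ j * nlc F m j p) * Dy m (Dy i S) p)"
      by (simp only: sum_distrib_right mult.assoc)
    also have "\<dots> = Gop F (Dy i S) p"
      unfolding N Gop_split by (simp add: sum_negf[symmetric] sum_distrib_left ac_simps)
    finally show ?thesis .
  qed
  have B: "(\<Sum>j\<in>UNIV. snd p $ j * dl i (Dy j S) p) = Dx i S p"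
  proof -
    have "(\<Sum>j\<in>UNIV. snd p $ j * dl i (Dy j S) p)
        = (\<Sum>j\<in>UNIV. snd p $ j * Dx i (Dy j S) p) - (\<Sum>j\<in>UNIV. \<Sum>m\<in>UNIV. snd p $ j * (nlc F m i p * Dy m (Dy j S) p))"
      unfolding dl_def by (simp only: right_diff_distrib sum_subtractf sum_distrib_left)
    also have "\<dots> = (\<Sum>j\<in>UNIV. snd p $ j * Dx i (Dy j S) p) - (\<Sum>m\<in>UNIV. \<Sum>j\<in>UNIV. snd p $ j * (nlc F m i p * Dy m (Dy j S) p))"
      by (subst sum.swap) (rule refl)
    also have "\<dots> = (\<Sum>j\<in>UNIV. snd p $ j * Dx i (Dy j S) p) - (\<Sum>m\<in>UNIV. nlc F m i p * (\<Sum>j\<in>UNIV. snd p $ j * Dy m (Dy j S) p))"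
      by (simp only: sum_distrib_left mult.left_commute)
    also have "\<dots> = Dx i S p"
      unfolding XS[OF p] YS[OF p] by simp
    finally show ?thesis .
  qed
  show ?thesis unfolding right_diff_distrib sum_subtractf A B chi_eq by simp
qed

end


context fctx begin

lemma chi_fun: "chi F \<sigma> i = (\<lambda>q. 1/2 * (Gop F (Dy i S) q - Dx i S q))"
  by (simp add: chi_def fun_eq_iff)

lemma dchi:
  assumes p: "p \<in> W"
  shows "Dy k (chi F \<sigma> i) p - Dy i (chi F \<sigma> k) p = dl k (Dy i S) p - dl i (Dy k S) p"
proof -
  have Dchi: "Dy k (chi F \<sigma> i) p = 1/2 * (Dy k (Gop F (Dy i S)) p - Dy k (Dx i S) p)" for k i
  proof -
    have d1: "Gop F (Dy i S) differentiable (at p)" by (rule sdiff[OF sGop[OF smooth_pd[OF sS]] p])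
    have d2: "Dx i S differentiable (at p)" by (rule sdiff[OF smooth_pd[OF sS] p])
    have "Dy k (\<lambda>q. 1/2 * (Gop F (Dy i S) q - Dx i S q)) p = 1/2 * Dy k (\<lambda>q. Gop F (Dy i S) q - Dx i S q) p"
      by (rule pd_cmult) (intro differentiable_diff d1 d2)
    also have "Dy k (\<lambda>q. Gop F (Dy i S) q - Dx i S q) p = Dy k (Gop F (Dy i S)) p - Dy k (Dx i S) p"
      by (rule pd_diff[OF d1 d2])
    finally show ?thesis unfolding chi_fun .
  qed
  have s1: "Dy k (Dx l (Dy i S)) p = Dy i (Dx l (Dy k S)) p" for k l i
  proof -
    have "Dy k (Dx l (Dy i S)) p = Dx l (Dy k (Dy i S)) p" by (rule pd_schwarz[OF smooth_pd[OF sS] p])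
    also have "\<dots> = Dx l (Dy i (Dy k S)) p" by (rule pd_local[OF p]) (rule pd_schwarz[OF sS])
    also have "\<dots> = Dy i (Dx l (Dy k S)) p" by (rule pd_schwarz[OF smooth_pd[OF sS] p])
    finally show ?thesis .
  qed
  have s2: "Dy k (Dy m (Dy i S)) p = Dy i (Dy m (Dy k S)) p" for k m i
  proof -
    have "Dy k (Dy m (Dy i S)) p = Dy m (Dy k (Dy i S)) p" by (rule pd_schwarz[OF smooth_pd[OF sS] p])
    also have "\<dots> = Dy m (Dy i (Dy k S)) p" by (rule pd_local[OF p]) (rule pd_schwarz[OF sS])
    also have "\<dots> = Dy i (Dy m (Dy k S)) p" by (rule pd_schwarz[OF smooth_pd[OF sS] p])
    finally show ?thesis .
  qed
  have s3: "Dy k (Dx i S) p = Dx i (Dy k S) p" for k i by (rule pd_schwarz[OF sS p])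
  have G1: "Dy k (Gop F (Dy i S)) p = Dx k (Dy i S) p + (\<Sum>l\<in>UNIV. snd p $ l * Dy k (Dx l (Dy i S)) p)
     - 2 * (\<Sum>m\<in>UNIV. nlc F m k p * Dy m (Dy i S) p) - 2 * (\<Sum>m\<in>UNIV. spray F m p * Dy k (Dy m (Dy i S)) p)" for k i
    by (rule DyGop[OF smooth_pd[OF sS] p])
  show ?thesis
    unfolding Dchi G1 s3 dl_def
    by (simp add: s1[of k _ i] s2[of k _ i] algebra_simps)
qed

lemma chi_iff_T:
  "(\<forall>p\<in>W. \<forall>i. chi F \<sigma> i p = 0) \<longleftrightarrow> (\<forall>p\<in>W. \<forall>a b. dl a (Dy b S) p = dl b (Dy a S) p)"
proof
  assume C: "\<forall>p\<in>W. \<forall>i. chi F \<sigma> i p = 0"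
  show "\<forall>p\<in>W. \<forall>a b. dl a (Dy b S) p = dl b (Dy a S) p"
  proof (intro ballI allI)
    fix p a b assume p: "p \<in> W"
    have z: "Dy k (chi F \<sigma> i) p = 0" for k i
    proof -
      have "Dy k (chi F \<sigma> i) p = Dy k (\<lambda>_. 0) p" using C by (intro pd_local[OF p]) auto
      then show ?thesis by (simp add: pd_def)
    qed
    show "dl a (Dy b S) p = dl b (Dy a S) p" using dchi[OF p, of a b] z by simp
  qed
next
  assume T: "\<forall>p\<in>W. \<forall>a b. dl a (Dy b S) p = dl b (Dy a S) p"
  show "\<forall>p\<in>W. \<forall>i. chi F \<sigma> i p = 0"
  proof (intro ballI allI)
    fix p i assume p: "p \<in> W"
    show "chi F \<sigma> i p = 0" using chi_contract[OF p, of i] T p by simp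
  qed
qed

end


lemma Dy_fst: "pd (Inr b) (\<lambda>q::('n::finite) pt. k (fst q)) = (\<lambda>_. 0)"
  unfolding pd_def dirD_fst by (simp add: cvec_def dirD_def)

lemma Dx_fst: "pd (Inl b) (\<lambda>q::('n::finite) pt. k (fst q)) = (\<lambda>q. dirD k (axis b 1) (fst q))"
  unfolding pd_def dirD_fst by (simp add: cvec_def)

context fctx begin

lemma Dx_sg: "Dx b sg_ln = (\<lambda>q. dirD (\<lambda>x. ln \<bar>\<sigma> x\<bar>) (axis b 1) (fst q))"
  unfolding sg_ln_def using Dx_fst[of b "\<lambda>x. ln \<bar>\<sigma> x\<bar>"] by simp

lemma Dy_Dx_sg: "Dy a (Dx b sg_ln) = (\<lambda>_. 0)"
  unfolding Dx_sg using Dy_fst[of a "\<lambda>x. dirD (\<lambda>x. ln \<bar>\<sigma> x\<bar>) (axis b 1) x"] by simp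

lemma Dy_sg: "Dy a sg_ln = (\<lambda>_. 0)"
  unfolding sg_ln_def using Dy_fst[of a "\<lambda>x. ln \<bar>\<sigma> x\<bar>"] by simp

lemma S_eq: "q \<in> W \<Longrightarrow> S q = (\<Sum>m\<in>UNIV. Dy m (spray F m) q) - 1/2 * (\<Sum>l\<in>UNIV. snd q $ l * Dx l sg_ln q)"
proof -
  assume q: "q \<in> W"
  have pt: "pd A tau q = 1/2 * pd A Lg q - 1/2 * pd A sg_ln q" for A
  proof -
    have "pd A tau q = pd A (\<lambda>q. 1/2 * Lg q - 1/2 * sg_ln q) q"
      by (rule pd_local[OF q]) (rule tau_eq)
    also have "\<dots> = pd A (\<lambda>q. 1/2 * Lg q) q - pd A (\<lambda>q. 1/2 * sg_ln q) q"
      by (rule pd_diff) (intro differentiable_mult differentiable_const sdiff[OF _ q] sL ssg)+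
    also have "\<dots> = 1/2 * pd A Lg q - 1/2 * pd A sg_ln q"
      by (simp only: pd_cmult[OF sdiff[OF sL q]] pd_cmult[OF sdiff[OF ssg q]])
    finally show ?thesis .
  qed
  have "S q = (\<Sum>A\<in>UNIV. Gvec F A q * (1/2 * pd A Lg q - 1/2 * pd A sg_ln q))"
    unfolding Scurv_def Gop_eq pt ..
  also have "\<dots> = 1/2 * Gop F Lg q - 1/2 * Gop F sg_ln q"
    unfolding Gop_eq by (simp add: right_diff_distrib sum_subtractf sum_distrib_left ac_simps)
  also have "Gop F sg_ln q = (\<Sum>l\<in>UNIV. snd q $ l * Dx l sg_ln q)"
    unfolding Gop_split Dy_sg by simp
  finally show ?thesis unfolding key_identity[OF q] by simp
qed

lemma DyS: "q \<in> W \<Longrightarrow> Dy b S q = (\<Sum>m\<in>UNIV. Dy b (Dy m (spray F m)) q) - 1/2 * Dx b sg_ln q"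
proof -
  assume q: "q \<in> W"
  have d1: "(\<lambda>q. \<Sum>m\<in>UNIV. Dy m (spray F m) q) differentiable (at q)"
    by (intro differentiable_sum ballI sdiff[OF _ q] smooth_pd sspray) simp
  have d2: "(\<lambda>q. snd q $ l * Dx l sg_ln q) differentiable (at q)" for l
    by (intro differentiable_mult sdiff[OF _ q] smooth_snd_nth smooth_pd ssg)
  have d3: "(\<lambda>q. \<Sum>l\<in>UNIV. snd q $ l * Dx l sg_ln q) differentiable (at q)"
    using d2 by (intro differentiable_sum) auto
  have "Dy b S q = Dy b (\<lambda>q. (\<Sum>m\<in>UNIV. Dy m (spray F m) q) - 1/2 * (\<Sum>l\<in>UNIV. snd q $ l * Dx l sg_ln q)) q"
    by (rule pd_local[OF q]) (rule S_eq)
  also have "\<dots> = Dy b (\<lambda>q. \<Sum>m\<in>UNIV. Dy m (spray F m) q) q - Dy b (\<lambda>q. 1/2 * (\<Sum>l\<in>UNIV. snd q $ l * Dx l sg_ln q)) q"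
    by (rule pd_diff[OF d1]) (intro differentiable_mult differentiable_const d3)
  also have "Dy b (\<lambda>q. \<Sum>m\<in>UNIV. Dy m (spray F m) q) q = (\<Sum>m\<in>UNIV. Dy b (Dy m (spray F m)) q)"
    by (rule pd_sum) (auto intro: sdiff[OF _ q] smooth_pd sspray)
  also have "Dy b (\<lambda>q. 1/2 * (\<Sum>l\<in>UNIV. snd q $ l * Dx l sg_ln q)) q = 1/2 * Dy b (\<lambda>q. \<Sum>l\<in>UNIV. snd q $ l * Dx l sg_ln q) q"
    by (rule pd_cmult[OF d3])
  also have "Dy b (\<lambda>q. \<Sum>l\<in>UNIV. snd q $ l * Dx l sg_ln q) q = (\<Sum>l\<in>UNIV. Dy b (\<lambda>q. snd q $ l * Dx l sg_ln q) q)"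
    by (rule pd_sum) (use d2 in auto)
  also have "\<dots> = (\<Sum>l\<in>UNIV. (if l = b then 1 else 0) * Dx l sg_ln q)"
  proof (rule sum.cong[OF refl])
    fix l
    show "Dy b (\<lambda>q. snd q $ l * Dx l sg_ln q) q = (if l = b then 1 else 0) * Dx l sg_ln q"
      by (subst pd_mult) (auto intro: sdiff[OF _ q] smooth_snd_nth smooth_pd ssg simp: Dy_Dx_sg pd_snd)
  qed
  also have "\<dots> = Dx b sg_ln q" by (rule sum_delta_l')
  finally show ?thesis .
qed

lemma YYS: "p \<in> W \<Longrightarrow> Dy a (Dy b S) p = 2 * meanB F a b p"
proof -
  assume p: "p \<in> W"
  have d1: "(\<lambda>q. \<Sum>m\<in>UNIV. Dy b (Dy m (spray F m)) q) differentiable (at p)"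
    by (intro differentiable_sum ballI sdiff[OF _ p] smooth_pd sspray) simp
  have d2: "(\<lambda>q. 1/2 * Dx b sg_ln q) differentiable (at p)"
    by (intro differentiable_mult differentiable_const sdiff[OF _ p] smooth_pd ssg)
  have "Dy a (Dy b S) p = Dy a (\<lambda>q. (\<Sum>m\<in>UNIV. Dy b (Dy m (spray F m)) q) - 1/2 * Dx b sg_ln q) p"
    by (rule pd_local[OF p]) (rule DyS)
  also have "\<dots> = Dy a (\<lambda>q. \<Sum>m\<in>UNIV. Dy b (Dy m (spray F m)) q) p - Dy a (\<lambda>q. 1/2 * Dx b sg_ln q) p"
    by (rule pd_diff[OF d1 d2])
  also have "Dy a (\<lambda>q. \<Sum>m\<in>UNIV. Dy b (Dy m (spray F m)) q) p = (\<Sum>m\<in>UNIV. Dy a (Dy b (Dy m (spray F m))) p)"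
    by (rule pd_sum) (auto intro: sdiff[OF _ p] smooth_pd sspray)
  also have "Dy a (\<lambda>q. 1/2 * Dx b sg_ln q) p = 1/2 * Dy a (Dx b sg_ln) p"
    by (rule pd_cmult[OF sdiff[OF smooth_pd[OF ssg] p]])
  finally show ?thesis unfolding Dy_Dx_sg meanB_def by simp
qed

end


lemma pd_zero[simp]: "pd A (\<lambda>_. 0) = (\<lambda>_. 0)"
  by (simp add: pd_def)

context fctx begin

lemma hsum_Inl: "(\<Sum>C\<in>UNIV. hproj F C (Inl a) p * X C) = X (Inl a) - (\<Sum>j\<in>UNIV. nlc F j a p * X (Inr j))"
proof -
  have "(\<Sum>C\<in>UNIV. hproj F C (Inl a) p * X C) = (\<Sum>k\<in>UNIV. (if k = a then 1 else 0) * X (Inl k)) + (\<Sum>j\<in>UNIV. - (nlc F j a p * X (Inr j)))"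
    unfolding sum_Plus_UNIV by (simp add: hproj_def)
  then show ?thesis by (simp add: sum_delta_l' sum_negf)
qed

lemma hsum_Inr: "(\<Sum>C\<in>UNIV. hproj F C (Inr a) p * X C) = 0"
  by (simp add: hproj_def)

lemma dJ_Inl[simp]: "dJ f (Inl i) = Dy i f" by (simp add: dJ_def)
lemma dJ_Inr[simp]: "dJ f (Inr i) = (\<lambda>_. 0)" by (simp add: dJ_def)

lemma ih1_dJ: "ih1 F (dJ f) = dJ f"
proof (intro ext)
  fix A p
  show "ih1 F (dJ f) A p = dJ f A p"
    unfolding ih1_def by (cases A) (simp_all add: hsum_Inl hsum_Inr)
qed

lemma ih2_split: "ih2 F \<omega> A B p = (\<Sum>C\<in>UNIV. hproj F C A p * \<omega> C B p) + (\<Sum>C\<in>UNIV. hproj F C B p * \<omega> A C p)"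
  unfolding ih2_def by (simp add: sum.distrib)

lemma dh_comp: "dh F (dJ S) A B p = (case A of Inl a \<Rightarrow> (case B of Inl b \<Rightarrow> dl a (Dy b S) p - dl b (Dy a S) p | Inr b \<Rightarrow> 0) | Inr a \<Rightarrow> 0)"
proof (cases A; cases B)
  fix a b assume A: "A = Inl a" and B: "B = Inl b"
  show ?thesis unfolding A B dh_def ih1_dJ ih2_split hsum_Inl
    by (simp add: dform1_def dl_def sum_negf)
next
  fix a b assume A: "A = Inl a" and B: "B = Inr b"
  show ?thesis unfolding A B dh_def ih1_dJ ih2_split hsum_Inl hsum_Inr
    by (simp add: dform1_def)
next
  fix a b assume A: "A = Inr a" and B: "B = Inl b"
  show ?thesis unfolding A B dh_def ih1_dJ ih2_split hsum_Inl hsum_Inr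
    by (simp add: dform1_def)
next
  fix a b assume A: "A = Inr a" and B: "B = Inr b"
  show ?thesis unfolding A B dh_def ih1_dJ ih2_split hsum_Inr
    by (simp add: dform1_def)
qed

lemma main2: "(\<forall>p\<in>W. \<forall>A B. dh F (dJ S) A B p = 0) \<longleftrightarrow> (\<forall>p\<in>W. \<forall>a b. dl a (Dy b S) p = dl b (Dy a S) p)"
proof
  assume H: "\<forall>p\<in>W. \<forall>A B. dh F (dJ S) A B p = 0"
  show "\<forall>p\<in>W. \<forall>a b. dl a (Dy b S) p = dl b (Dy a S) p"
  proof (intro ballI allI)
    fix p a b assume "p \<in> W"
    then have "dh F (dJ S) (Inl a) (Inl b) p = 0" using H by blast
    then show "dl a (Dy b S) p = dl b (Dy a S) p" unfolding dh_comp by simp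
  qed
next
  assume T: "\<forall>p\<in>W. \<forall>a b. dl a (Dy b S) p = dl b (Dy a S) p"
  show "\<forall>p\<in>W. \<forall>A B. dh F (dJ S) A B p = 0"
  proof (intro ballI allI)
    fix p A B assume "p \<in> W"
    then show "dh F (dJ S) A B p = 0" unfolding dh_comp using T
      by (cases A; cases B) auto
  qed
qed

end


context fctx begin

lemma alpha_fun: "alpha F \<sigma> A = (\<lambda>q. dJ S A q - pd A tau q)"
  by (simp add: alpha_def dform0_def fun_eq_iff)

lemma sdJ: "smooth_on W (dJ S A)"
  by (cases A) (simp_all add: smooth_pd sS)

lemma salpha: "smooth_on W (alpha F \<sigma> A)"
  unfolding alpha_fun by (intro smooth_diff_fun openW sdJ smooth_pd stau)

lemma Z: "q \<in> W \<Longrightarrow> (\<Sum>B\<in>UNIV. Gvec F B q * alpha F \<sigma> B q) = 0"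
proof -
  assume q: "q \<in> W"
  have "(\<Sum>B\<in>UNIV. Gvec F B q * alpha F \<sigma> B q) = (\<Sum>B\<in>UNIV. Gvec F B q * dJ S B q) - (\<Sum>B\<in>UNIV. Gvec F B q * pd B tau q)"
    unfolding alpha_fun by (simp add: right_diff_distrib sum_subtractf)
  also have "(\<Sum>B\<in>UNIV. Gvec F B q * dJ S B q) = (\<Sum>l\<in>UNIV. snd q $ l * Dy l S q)"
    unfolding sum_Plus_UNIV by (simp add: Gvec_def)
  also have "(\<Sum>B\<in>UNIV. Gvec F B q * pd B tau q) = S q"
    by (simp add: Scurv_def Gop_eq)
  finally show ?thesis using E2[OF q] by simp
qed

lemma alpha_anti: "p \<in> W \<Longrightarrow> pd B (alpha F \<sigma> A) p - pd A (alpha F \<sigma> B) p = pd B (dJ S A) p - pd A (dJ S B) p"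
proof -
  assume p: "p \<in> W"
  have e: "pd B (alpha F \<sigma> A) p = pd B (dJ S A) p - pd B (pd A tau) p" for A B
    unfolding alpha_fun by (rule pd_diff) (intro sdiff[OF _ p] sdJ smooth_pd stau)+
  show ?thesis unfolding e using pd_schwarz[OF stau p, of B A] by simp
qed

lemma lie1_eq: "p \<in> W \<Longrightarrow> lie1 (Gvec F) (alpha F \<sigma>) A p = (\<Sum>B\<in>UNIV. Gvec F B p * (pd B (dJ S A) p - pd A (dJ S B) p))"
proof -
  assume p: "p \<in> W"
  have dZ: "(\<Sum>B\<in>UNIV. Gvec F B p * pd A (alpha F \<sigma> B) p + pd A (Gvec F B) p * alpha F \<sigma> B p) = 0"
  proof -
    have "pd A (\<lambda>q. \<Sum>B\<in>UNIV. Gvec F B q * alpha F \<sigma> B q) p = pd A (\<lambda>_. 0) p"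
      by (rule pd_local[OF p]) (rule Z)
    moreover have "pd A (\<lambda>q. \<Sum>B\<in>UNIV. Gvec F B q * alpha F \<sigma> B q) p = (\<Sum>B\<in>UNIV. Gvec F B p * pd A (alpha F \<sigma> B) p + pd A (Gvec F B) p * alpha F \<sigma> B p)"
      by (subst pd_sum) (auto intro!: sum.cong pd_mult differentiable_mult sdiff[OF _ p] sGvec salpha smooth_mult[OF openW])
    ultimately show ?thesis by simp
  qed
  have "lie1 (Gvec F) (alpha F \<sigma>) A p = (\<Sum>B\<in>UNIV. Gvec F B p * pd B (alpha F \<sigma> A) p) + (\<Sum>B\<in>UNIV. alpha F \<sigma> B p * pd A (Gvec F B) p)"
    unfolding lie1_def by (simp add: sum.distrib)
  also have "(\<Sum>B\<in>UNIV. alpha F \<sigma> B p * pd A (Gvec F B) p) = - (\<Sum>B\<in>UNIV. Gvec F B p * pd A (alpha F \<sigma> B) p)"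
    using dZ by (simp add: sum.distrib mult.commute eq_neg_iff_add_eq_0 add.commute)
  also have "(\<Sum>B\<in>UNIV. Gvec F B p * pd B (alpha F \<sigma> A) p) + - (\<Sum>B\<in>UNIV. Gvec F B p * pd A (alpha F \<sigma> B) p)
      = (\<Sum>B\<in>UNIV. Gvec F B p * (pd B (alpha F \<sigma> A) p - pd A (alpha F \<sigma> B) p))"
    by (simp add: right_diff_distrib sum_subtractf)
  finally show ?thesis unfolding alpha_anti[OF p] .
qed

lemma lie1_Inl: "p \<in> W \<Longrightarrow> lie1 (Gvec F) (alpha F \<sigma>) (Inl i) p = 2 * chi F \<sigma> i p"
proof -
  assume p: "p \<in> W"
  have "lie1 (Gvec F) (alpha F \<sigma>) (Inl i) p = (\<Sum>l\<in>UNIV. snd p $ l * (Dx l (Dy i S) p - Dx i (Dy l S) p))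
      + (\<Sum>k\<in>UNIV. (- 2 * spray F k p) * Dy k (Dy i S) p)"
    unfolding lie1_eq[OF p] sum_Plus_UNIV by (simp add: Gvec_def)
  also have "\<dots> = Gop F (Dy i S) p - (\<Sum>l\<in>UNIV. snd p $ l * Dx i (Dy l S) p)"
    unfolding Gop_split by (simp add: right_diff_distrib sum_subtractf)
  finally show ?thesis unfolding XS[OF p] chi_eq by simp
qed

lemma lie1_Inr: "p \<in> W \<Longrightarrow> lie1 (Gvec F) (alpha F \<sigma>) (Inr i) p = 0"
proof -
  assume p: "p \<in> W"
  have "lie1 (Gvec F) (alpha F \<sigma>) (Inr i) p = - (\<Sum>l\<in>UNIV. snd p $ l * Dy i (Dy l S) p)"
    unfolding lie1_eq[OF p] sum_Plus_UNIV by (simp add: Gvec_def sum_negf)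
  then show ?thesis unfolding YS[OF p] by simp
qed

lemma main1: "(\<forall>p\<in>W. \<forall>A. lie1 (Gvec F) (alpha F \<sigma>) A p = 0) \<longleftrightarrow> (\<forall>p\<in>W. \<forall>i. chi F \<sigma> i p = 0)"
proof
  assume H: "\<forall>p\<in>W. \<forall>A. lie1 (Gvec F) (alpha F \<sigma>) A p = 0"
  show "\<forall>p\<in>W. \<forall>i. chi F \<sigma> i p = 0"
    using H lie1_Inl by (metis mult_eq_0_iff zero_neq_numeral)
next
  assume C: "\<forall>p\<in>W. \<forall>i. chi F \<sigma> i p = 0"
  show "\<forall>p\<in>W. \<forall>A. lie1 (Gvec F) (alpha F \<sigma>) A p = 0"
  proof (intro ballI allI)
    fix p A assume p: "p \<in> W"
    show "lie1 (Gvec F) (alpha F \<sigma>) A p = 0"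
      using C p by (cases A) (simp_all add: lie1_Inl lie1_Inr)
  qed
qed

lemma dalpha_eq: "p \<in> W \<Longrightarrow> dform1 (alpha F \<sigma>) A B p = pd A (dJ S B) p - pd B (dJ S A) p"
  unfolding dform1_def using alpha_anti[of p A B] by simp

abbreviation "rhs A B p \<equiv> 2 * (\<Sum>i\<in>UNIV. \<Sum>j\<in>UNIV. meanB F i j p * wedge (deltay_form F i) (dx_form j) A B p)"

lemma rhs_LL: "rhs (Inl a) (Inl b) p = 2 * (\<Sum>i\<in>UNIV. nlc F i a p * meanB F i b p) - 2 * (\<Sum>i\<in>UNIV. nlc F i b p * meanB F i a p)"
proof -
  have "(\<Sum>j\<in>UNIV. meanB F i j p * wedge (deltay_form F i) (dx_form j) (Inl a) (Inl b) p)
      = nlc F i a p * meanB F i b p - nlc F i b p * meanB F i a p" for i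
  proof -
    have "(\<Sum>j\<in>UNIV. meanB F i j p * wedge (deltay_form F i) (dx_form j) (Inl a) (Inl b) p)
       = nlc F i a p * (\<Sum>j\<in>UNIV. meanB F i j p * (if b = j then 1 else 0)) - nlc F i b p * (\<Sum>j\<in>UNIV. meanB F i j p * (if a = j then 1 else 0))"
      by (simp add: wedge_def deltay_form_def dx_form_def sum_distrib_left right_diff_distrib sum_subtractf ac_simps)
    then show ?thesis by (simp only: sum_delta_r')
  qed
  then show ?thesis by (simp add: sum_subtractf)
qed

lemma rhs_LR: "rhs (Inl a) (Inr b) p = - 2 * meanB F b a p"
proof -
  have "(\<Sum>j\<in>UNIV. meanB F i j p * wedge (deltay_form F i) (dx_form j) (Inl a) (Inr b) p)
      = - ((if b = i then 1 else 0) * meanB F i a p)" for i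
  proof -
    have "(\<Sum>j\<in>UNIV. meanB F i j p * wedge (deltay_form F i) (dx_form j) (Inl a) (Inr b) p)
       = - ((if b = i then 1 else 0) * (\<Sum>j\<in>UNIV. meanB F i j p * (if a = j then 1 else 0)))"
      by (simp add: wedge_def deltay_form_def dx_form_def sum_distrib_left sum_negf ac_simps)
    then show ?thesis by (simp only: sum_delta_r')
  qed
  then show ?thesis by (simp add: sum_negf sum_delta_l)
qed

lemma rhs_RL: "rhs (Inr a) (Inl b) p = 2 * meanB F a b p"
proof -
  have "(\<Sum>j\<in>UNIV. meanB F i j p * wedge (deltay_form F i) (dx_form j) (Inr a) (Inl b) p)
      = (if a = i then 1 else 0) * meanB F i b p" for i
  proof -
    have "(\<Sum>j\<in>UNIV. meanB F i j p * wedge (deltay_form F i) (dx_form j) (Inr a) (Inl b) p)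
       = (if a = i then 1 else 0) * (\<Sum>j\<in>UNIV. meanB F i j p * (if b = j then 1 else 0))"
      by (simp add: wedge_def deltay_form_def dx_form_def sum_distrib_left ac_simps)
    then show ?thesis by (simp only: sum_delta_r')
  qed
  then show ?thesis by (simp add: sum_delta_l)
qed

lemma rhs_RR: "rhs (Inr a) (Inr b) p = 0"
  by (simp add: wedge_def deltay_form_def dx_form_def)

lemma main3: "(\<forall>p\<in>W. \<forall>A B. dform1 (alpha F \<sigma>) A B p = rhs A B p) \<longleftrightarrow> (\<forall>p\<in>W. \<forall>a b. dl a (Dy b S) p = dl b (Dy a S) p)"
proof -
  have LL: "dform1 (alpha F \<sigma>) (Inl a) (Inl b) p = rhs (Inl a) (Inl b) p \<longleftrightarrow> dl a (Dy b S) p = dl b (Dy a S) p"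
    if p: "p \<in> W" for p a b
  proof -
    have "2 * (\<Sum>i\<in>UNIV. nlc F i a p * meanB F i b p) = (\<Sum>i\<in>UNIV. nlc F i a p * Dy i (Dy b S) p)"
      unfolding YYS[OF p] sum_distrib_left by (simp add: ac_simps)
    moreover have "2 * (\<Sum>i\<in>UNIV. nlc F i b p * meanB F i a p) = (\<Sum>i\<in>UNIV. nlc F i b p * Dy i (Dy a S) p)"
      unfolding YYS[OF p] sum_distrib_left by (simp add: ac_simps)
    ultimately show ?thesis
      unfolding dalpha_eq[OF p] rhs_LL dl_def by simp linarith
  qed
  have LR: "dform1 (alpha F \<sigma>) (Inl a) (Inr b) p = rhs (Inl a) (Inr b) p" if p: "p \<in> W" for p a b
    unfolding dalpha_eq[OF p] rhs_LR using YYS[OF p, of b a] by simp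
  have RL: "dform1 (alpha F \<sigma>) (Inr a) (Inl b) p = rhs (Inr a) (Inl b) p" if p: "p \<in> W" for p a b
    unfolding dalpha_eq[OF p] rhs_RL using YYS[OF p, of a b] by simp
  have RR: "dform1 (alpha F \<sigma>) (Inr a) (Inr b) p = rhs (Inr a) (Inr b) p" if p: "p \<in> W" for p a b
    unfolding dalpha_eq[OF p] rhs_RR by simp
  show ?thesis
  proof
    assume H: "\<forall>p\<in>W. \<forall>A B. dform1 (alpha F \<sigma>) A B p = rhs A B p"
    show "\<forall>p\<in>W. \<forall>a b. dl a (Dy b S) p = dl b (Dy a S) p"
      using H LL by blast
  next
    assume T: "\<forall>p\<in>W. \<forall>a b. dl a (Dy b S) p = dl b (Dy a S) p"
    show "\<forall>p\<in>W. \<forall>A B. dform1 (alpha F \<sigma>) A B p = rhs A B p"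
    proof (intro ballI allI)
      fix p A B assume p: "p \<in> W"
      show "dform1 (alpha F \<sigma>) A B p = rhs A B p"
        using T p LL LR RL RR by (cases A; cases B) auto
    qed
  qed
qed

end

theorem lemma3p2:
  fixes F :: "(real^'n::finite) \<times> (real^'n) \<Rightarrow> real"
    and \<sigma> :: "real^'n \<Rightarrow> real"
    and U :: "(real^'n) set"
  assumes dim: "CARD('n) \<ge> 2"
    and fins: "finsler_on U F"
    and sig_smooth: "smooth_on U \<sigma>"
    and sig_nz: "\<forall>x\<in>U. \<sigma> x \<noteq> 0"
  shows "((\<forall>p\<in>T0 U. \<forall>i. chi F \<sigma> i p = 0) \<longleftrightarrow>
            (\<forall>p\<in>T0 U. \<forall>A. lie1 (Gvec F) (alpha F \<sigma>) A p = 0))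
       \<and> ((\<forall>p\<in>T0 U. \<forall>i. chi F \<sigma> i p = 0) \<longleftrightarrow>
            (\<forall>p\<in>T0 U. \<forall>A B. dh F (dJ (Scurv F \<sigma>)) A B p = 0))
       \<and> ((\<forall>p\<in>T0 U. \<forall>i. chi F \<sigma> i p = 0) \<longleftrightarrow>
            (\<forall>p\<in>T0 U. \<forall>A B. dform1 (alpha F \<sigma>) A B p =
               2 * (\<Sum>i\<in>UNIV. \<Sum>j\<in>UNIV. meanB F i j p * wedge (deltay_form F i) (dx_form j) A B p)))"
proof -
  interpret fctx U F \<sigma> using fins sig_smooth sig_nz by unfold_locales
  show ?thesis using main1 main2 main3 chi_iff_T by blast
qed


end
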